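(* Let $\Omega\subset\mathbb{R}^n$ be a bounded domain of class $C^2$. Assume that $\mu, c\in L^\infty(\Omega)$, $h\in L^r(\Omega)$ for some $r>\max(1,n/2)$, that $\mu,c,h\ge0$ a.e. and none of them vanishes identically, and that there exist $x_0\in\Omega$ and $\rho,\eta>0$ with $B(x_0,\rho)\subset\Omega$ and $\mu\ge\eta$, $c\ge\eta$ a.e. on $B(x_0,\rho)$. Let $0<\Lambda_1\le\gamma_1$. Then there exists a constant $C>0$ (depending on $\eta,\rho$ and the data, but independent of $u$ and $\lambda$) such that for every $\lambda\in[\Lambda_1,\gamma_1]$, any nonnegative solution $u$ of $(P_\lambda)$ satisfies $$\int_{B_{\rho/2}(x_0)}e^{\eta u}\le C.$$
   Context: For $\lambda\in\mathbb{R}$, problem $(P_\lambda)$ is: $-\Delta u=\mu(x)|\nabla u|^2+\lambda c(x)u+h(x)$ in $\Omega$, $u\in H^1_0(\Omega)\cap L^\infty(\Omega)$, understood in the weak sense with test functions in $H^1_0(\Omega)\cap L^\infty(\Omega)$; nonnegative means $u\ge0$ a.e. $\gamma_1>0$ is the first eigenvalue of the weighted problem $-\Delta\varphi=\gamma c(x)\varphi$, $\varphi\in H^1_0(\Omega)$. *)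

theory Defs
  imports "HOL-Analysis.Analysis"
begin

definition dderiv :: "'a::euclidean_space \<Rightarrow> ('a \<Rightarrow> real) \<Rightarrow> 'a \<Rightarrow> real" where
  "dderiv v f x = frechet_derivative f (at x) v"

definition cgrad :: "('a::euclidean_space \<Rightarrow> real) \<Rightarrow> 'a \<Rightarrow> 'a" where
  "cgrad f x = (\<Sum>b\<in>Basis. dderiv b f x *\<^sub>R b)"

definition smooth_fun :: "('a::euclidean_space \<Rightarrow> real) \<Rightarrow> bool" where
  "smooth_fun f \<longleftrightarrow> (\<forall>vs. set vs \<subseteq> Basis \<longrightarrow> (\<forall>x. foldr dderiv vs f differentiable (at x)))"

definition test_fun :: "'a::euclidean_space set \<Rightarrow> ('a \<Rightarrow> real) \<Rightarrow> bool" where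
  "test_fun \<Omega> f \<longleftrightarrow> smooth_fun f \<and> (\<exists>K. compact K \<and> K \<subseteq> \<Omega> \<and> (\<forall>x. x \<notin> K \<longrightarrow> f x = 0))"

definition C2_fun :: "('a::euclidean_space \<Rightarrow> real) \<Rightarrow> bool" where
  "C2_fun f \<longleftrightarrow> (\<forall>x. f differentiable (at x)) \<and>
     (\<forall>b1\<in>Basis. (\<forall>x. dderiv b1 f differentiable (at x)) \<and>
        (\<forall>b2\<in>Basis. continuous_on UNIV (dderiv b2 (dderiv b1 f))))"

definition C2_bounded_domain :: "'a::euclidean_space set \<Rightarrow> bool" where
  "C2_bounded_domain \<Omega> \<longleftrightarrow> open \<Omega> \<and> connected \<Omega> \<and> \<Omega> \<noteq> {} \<and> bounded \<Omega> \<and>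
     (\<forall>p\<in>frontier \<Omega>. \<exists>r>0. \<exists>\<psi>. C2_fun \<psi> \<and> cgrad \<psi> p \<noteq> 0 \<and>
         \<Omega> \<inter> ball p r = {x \<in> ball p r. \<psi> x < 0})"

definition Lp_on :: "real \<Rightarrow> 'a::euclidean_space set \<Rightarrow> ('a \<Rightarrow> real) \<Rightarrow> bool" where
  "Lp_on p \<Omega> f \<longleftrightarrow> set_borel_measurable lebesgue \<Omega> f \<and>
     set_integrable lebesgue \<Omega> (\<lambda>x. \<bar>f x\<bar> powr p)"

definition Linf_on :: "'a::euclidean_space set \<Rightarrow> ('a \<Rightarrow> real) \<Rightarrow> bool" where
  "Linf_on \<Omega> f \<longleftrightarrow> set_borel_measurable lebesgue \<Omega> f \<and>
     (\<exists>M. AE x in lebesgue. x \<in> \<Omega> \<longrightarrow> \<bar>f x\<bar> \<le> M)"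

text \<open>u belongs to H^1_0(Omega) with (weak) gradient G: u, G in L^2(Omega) and
  u is the H^1-limit of test functions (closure of C_c^infinity in H^1).\<close>
definition H10 :: "'a::euclidean_space set \<Rightarrow> ('a \<Rightarrow> real) \<Rightarrow> ('a \<Rightarrow> 'a) \<Rightarrow> bool" where
  "H10 \<Omega> u G \<longleftrightarrow>
     set_borel_measurable lebesgue \<Omega> u \<and> set_integrable lebesgue \<Omega> (\<lambda>x. (u x)\<^sup>2) \<and>
     set_borel_measurable lebesgue \<Omega> G \<and> set_integrable lebesgue \<Omega> (\<lambda>x. (norm (G x))\<^sup>2) \<and>
     (\<exists>\<phi>. (\<forall>k. test_fun \<Omega> (\<phi> k)) \<and>
        (\<lambda>k. set_lebesgue_integral lebesgue \<Omega>
               (\<lambda>x. (\<phi> k x - u x)\<^sup>2 + (norm (cgrad (\<phi> k) x - G x))\<^sup>2)) \<longlonglongrightarrow> 0)"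

definition is_solution :: "'a::euclidean_space set \<Rightarrow> ('a \<Rightarrow> real) \<Rightarrow> ('a \<Rightarrow> real) \<Rightarrow>
    ('a \<Rightarrow> real) \<Rightarrow> real \<Rightarrow> ('a \<Rightarrow> real) \<Rightarrow> bool" where
  "is_solution \<Omega> \<mu> c h lam u \<longleftrightarrow>
     (\<exists>G. H10 \<Omega> u G \<and> Linf_on \<Omega> u \<and>
        (\<forall>v Gv. H10 \<Omega> v Gv \<and> Linf_on \<Omega> v \<longrightarrow>
           set_lebesgue_integral lebesgue \<Omega> (\<lambda>x. G x \<bullet> Gv x) =
           set_lebesgue_integral lebesgue \<Omega>
             (\<lambda>x. (\<mu> x * (norm (G x))\<^sup>2 + lam * c x * u x + h x) * v x)))"

definition weighted_eigenvalue :: "'a::euclidean_space set \<Rightarrow> ('a \<Rightarrow> real) \<Rightarrow> real \<Rightarrow> bool" where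
  "weighted_eigenvalue \<Omega> c \<gamma> \<longleftrightarrow>
     (\<exists>\<phi> G. H10 \<Omega> \<phi> G \<and> \<not> (AE x in lebesgue. x \<in> \<Omega> \<longrightarrow> \<phi> x = 0) \<and>
        (\<forall>v Gv. H10 \<Omega> v Gv \<longrightarrow>
           set_lebesgue_integral lebesgue \<Omega> (\<lambda>x. G x \<bullet> Gv x) =
           \<gamma> * set_lebesgue_integral lebesgue \<Omega> (\<lambda>x. c x * \<phi> x * v x)))"

definition first_eigenvalue :: "'a::euclidean_space set \<Rightarrow> ('a \<Rightarrow> real) \<Rightarrow> real" where
  "first_eigenvalue \<Omega> c = Inf {\<gamma>. weighted_eigenvalue \<Omega> c \<gamma>}"

end

theory Submission
  imports Defs "HOL-Computational_Algebra.Polynomial"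
begin

lemma dderiv_at: "(f has_derivative f') (at x) \<Longrightarrow> dderiv v f x = f' v"
  unfolding dderiv_def by (metis frechet_derivative_at)

lemma smooth_by_invariant:
  assumes "P f" "\<And>g x. P g \<Longrightarrow> g differentiable (at x)"
    "\<And>g b. P g \<Longrightarrow> b \<in> Basis \<Longrightarrow> P (dderiv b g)"
  shows "smooth_fun f"
proof -
  have "\<forall>vs. set vs \<subseteq> Basis \<longrightarrow> P (foldr dderiv vs f)"
  proof
    fix vs :: "'a list" show "set vs \<subseteq> Basis \<longrightarrow> P (foldr dderiv vs f)"
      by (induction vs) (auto simp: assms)
  qed
  then show ?thesis unfolding smooth_fun_def using assms(2) by blast
qed

inductive_set alg :: "('a::euclidean_space \<Rightarrow> real) set \<Rightarrow> ('a \<Rightarrow> real) set" for Gen where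
  gen: "g \<in> Gen \<Longrightarrow> g \<in> alg Gen"
| const: "(\<lambda>x. k) \<in> alg Gen"
| add: "f \<in> alg Gen \<Longrightarrow> g \<in> alg Gen \<Longrightarrow> (\<lambda>x. f x + g x) \<in> alg Gen"
| mult: "f \<in> alg Gen \<Longrightarrow> g \<in> alg Gen \<Longrightarrow> (\<lambda>x. f x * g x) \<in> alg Gen"

lemma alg_diff:
  assumes "\<And>g x. g \<in> Gen \<Longrightarrow> g differentiable (at x)"
  shows "f \<in> alg Gen \<Longrightarrow> f differentiable (at x)"
  by (induction rule: alg.induct) (auto simp: assms)

lemma dderiv_add: "f differentiable (at x) \<Longrightarrow> g differentiable (at x) \<Longrightarrow>
   dderiv b (\<lambda>x. f x + g x) x = dderiv b f x + dderiv b g x"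
  unfolding differentiable_def
  by (auto intro!: dderiv_at[THEN trans] has_derivative_add simp: dderiv_at)

lemma dderiv_mult: "f differentiable (at x) \<Longrightarrow> g differentiable (at x) \<Longrightarrow>
   dderiv b (\<lambda>x. f x * g x) x = f x * dderiv b g x + dderiv b f x * g x"
  unfolding differentiable_def
  by (auto intro!: dderiv_at[THEN trans] has_derivative_mult simp: dderiv_at)

lemma dderiv_const: "dderiv b (\<lambda>x. k) x = 0"
  by (rule dderiv_at[THEN trans]) (auto intro: has_derivative_const)

lemma alg_dderiv:
  assumes "\<And>g x. g \<in> Gen \<Longrightarrow> g differentiable (at x)"
    and "\<And>g. g \<in> Gen \<Longrightarrow> dderiv b g \<in> alg Gen"
  shows "f \<in> alg Gen \<Longrightarrow> dderiv b f \<in> alg Gen"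
proof (induction rule: alg.induct)
  case (gen g) then show ?case using assms by auto
next
  case (const k)
  have "dderiv b (\<lambda>x. k) = (\<lambda>x. 0)" by (rule ext, rule dderiv_const)
  then show ?case by (simp add: alg.const)
next
  case (add f g)
  have "dderiv b (\<lambda>x. f x + g x) = (\<lambda>x. dderiv b f x + dderiv b g x)"
    by (rule ext, rule dderiv_add) (use add alg_diff assms in auto)
  then show ?case using add by (simp add: alg.add)
next
  case (mult f g)
  have "dderiv b (\<lambda>x. f x * g x) = (\<lambda>x. f x * dderiv b g x + dderiv b f x * g x)"
    by (rule ext, rule dderiv_mult) (use mult alg_diff assms in auto)
  then show ?case using mult by (simp add: alg.mult alg.add)
qed

lemma alg_smooth:
  assumes "\<And>g x. g \<in> Gen \<Longrightarrow> g differentiable (at x)"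
    and "\<And>g b. g \<in> Gen \<Longrightarrow> b \<in> Basis \<Longrightarrow> dderiv b g \<in> alg Gen"
    and "f \<in> alg Gen"
  shows "smooth_fun f"
proof (rule smooth_by_invariant[where P="\<lambda>f. f \<in> alg Gen"])
  show "f \<in> alg Gen" by fact
  show "g differentiable (at x)" if "g \<in> alg Gen" for g x
    using alg_diff[OF assms(1) that] by blast
  show "dderiv b g \<in> alg Gen" if "g \<in> alg Gen" "b \<in> Basis" for g b
    using alg_dderiv[of Gen b g] assms(1,2) that by blast
qed

definition bet :: "real poly \<Rightarrow> real \<Rightarrow> real" where
  "bet P s = (if s > 0 then poly P (1/s) * exp (-1/s) else 0)"

definition betQ :: "real poly \<Rightarrow> real poly" where
  "betQ P = [:0,0,1:] * (P - pderiv P)"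

lemma poly_exp_lim: "((\<lambda>y. poly p y * exp (-y)) \<longlongrightarrow> (0::real)) at_top"
proof -
  have "((\<lambda>y. \<Sum>i\<le>degree p. coeff p i * (y ^ i / exp y)) \<longlongrightarrow> (\<Sum>i\<le>degree p. coeff p i * 0)) at_top"
    by (intro tendsto_sum tendsto_mult tendsto_const tendsto_power_div_exp_0)
  moreover have "poly p y * exp (-y) = (\<Sum>i\<le>degree p. coeff p i * (y ^ i / exp y))" for y
  proof -
    have "poly p y * exp (-y) = (\<Sum>i\<le>degree p. coeff p i * y ^ i) / exp y"
      by (simp add: poly_altdef exp_minus field_simps)
    also have "\<dots> = (\<Sum>i\<le>degree p. coeff p i * (y ^ i / exp y))"
      by (simp add: sum_divide_distrib)
    finally show ?thesis .
  qed
  ultimately show ?thesis by simp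
qed

lemma bet_deriv_pos:
  assumes "s > 0"
  shows "(bet P has_real_derivative bet (betQ P) s) (at s)"
proof -
  have d: "((\<lambda>s. poly P (1/s) * exp (-1/s)) has_real_derivative
      (poly (pderiv P) (1/s) * (- 1 / s^2)) * exp (-1/s) + poly P (1/s) * (exp (-1/s) * (1/s^2))) (at s)"
    using assms
    by (auto intro!: derivative_eq_intros simp: power2_eq_square field_simps)
  have e: "(poly (pderiv P) (1/s) * (- 1 / s^2)) * exp (-1/s) + poly P (1/s) * (exp (-1/s) * (1/s^2))
      = bet (betQ P) s"
    using assms by (simp add: bet_def betQ_def algebra_simps power2_eq_square field_simps)
  show ?thesis
    apply (rule has_field_derivative_transform_within_open[where S="{0<..}"])
    using d[unfolded e] assms by (auto simp: bet_def)
qed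

lemma bet_deriv_neg:
  assumes "s < 0"
  shows "(bet P has_real_derivative bet (betQ P) s) (at s)"
proof -
  have "((\<lambda>s. 0) has_real_derivative 0) (at s)" by simp
  then have "(bet P has_real_derivative 0) (at s)"
    by (rule has_field_derivative_transform_within_open[where S="{..<0}"]) (use assms in \<open>auto simp: bet_def\<close>)
  moreover have "bet (betQ P) s = 0" using assms by (simp add: bet_def)
  ultimately show ?thesis by simp
qed

lemma bet_deriv_0: "(bet P has_real_derivative bet (betQ P) 0) (at 0)"
proof -
  have "bet (betQ P) 0 = 0" by (simp add: bet_def)
  moreover have "((\<lambda>y. (bet P y - bet P 0) / (y - 0)) \<longlongrightarrow> 0) (at (0::real))"
  proof (subst filterlim_at_split, rule conjI)
    show "((\<lambda>y. (bet P y - bet P 0) / (y - 0)) \<longlongrightarrow> 0) (at_left (0::real))"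
    proof (rule Lim_transform_eventually[OF tendsto_const])
      show "\<forall>\<^sub>F x in at_left 0. 0 = (bet P x - bet P 0) / (x - 0)"
        unfolding eventually_at_left_field by (auto simp: bet_def intro!: exI[of _ "-1"])
    qed
    have lim: "((\<lambda>y. poly ([:0,1:] * P) y * exp (-y)) \<longlongrightarrow> 0) at_top"
      by (rule poly_exp_lim)
    have "((\<lambda>x. poly ([:0,1:] * P) (inverse x) * exp (- inverse x)) \<longlongrightarrow> 0) (at_right (0::real))"
      by (rule filterlim_compose[OF lim filterlim_inverse_at_top_right])
    then show "((\<lambda>y. (bet P y - bet P 0) / (y - 0)) \<longlongrightarrow> 0) (at_right (0::real))"
    proof (rule Lim_transform_eventually)
      show "\<forall>\<^sub>F x in at_right 0. poly ([:0,1:] * P) (inverse x) * exp (- inverse x) =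
          (bet P x - bet P 0) / (x - 0)"
        unfolding eventually_at_right_field
        by (auto simp: bet_def field_simps intro!: exI[of _ 1])
    qed
  qed
  ultimately show ?thesis by (simp add: has_field_derivative_iff)
qed

lemma bet_deriv: "(bet P has_real_derivative bet (betQ P) s) (at s)"
  using bet_deriv_pos bet_deriv_neg bet_deriv_0
  by (cases "s > 0"; cases "s < 0") (auto simp: not_less)

definition qf :: "'a::euclidean_space \<Rightarrow> real \<Rightarrow> 'a \<Rightarrow> real" where
  "qf x0 R x = R\<^sup>2 - (x - x0) \<bullet> (x - x0)"

definition bump :: "'a::euclidean_space \<Rightarrow> real \<Rightarrow> 'a \<Rightarrow> real" where
  "bump x0 R x = bet 1 (qf x0 R x)"

lemma qf_deriv: "(qf x0 R has_derivative (\<lambda>h. - (2 * ((x - x0) \<bullet> h)))) (at x)"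
  unfolding qf_def
  by (auto intro!: derivative_eq_intros simp: inner_commute)

lemma betq_deriv: "((\<lambda>x. bet P (qf x0 R x)) has_derivative
    (\<lambda>h. - (2 * ((x - x0) \<bullet> h)) * bet (betQ P) (qf x0 R x))) (at x)"
  by (rule DERIV_compose_FDERIV[OF bet_deriv qf_deriv])

lemma coord_deriv: "((\<lambda>x. (x - x0) \<bullet> b) has_derivative (\<lambda>h. h \<bullet> b)) (at x)"
  by (auto intro!: derivative_eq_intros)

lemma dderiv_betq: "dderiv b (\<lambda>x. bet P (qf x0 R x)) =
    (\<lambda>x. bet (betQ P) (qf x0 R x) * ((-2) * ((x - x0) \<bullet> b)))"
  by (rule ext, subst dderiv_at[OF betq_deriv]) simp

lemma dderiv_coord: "dderiv b' (\<lambda>x. (x - x0) \<bullet> b) = (\<lambda>x. b' \<bullet> b)"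
  by (rule ext, rule dderiv_at[OF coord_deriv])

definition bumpGen :: "'a::euclidean_space \<Rightarrow> real \<Rightarrow> ('a \<Rightarrow> real) set" where
  "bumpGen x0 R = range (\<lambda>P x. bet P (qf x0 R x)) \<union> range (\<lambda>b x. (x - x0) \<bullet> b)"

lemma bumpGen_diff: "g \<in> bumpGen x0 R \<Longrightarrow> g differentiable (at x)"
  unfolding bumpGen_def differentiable_def using betq_deriv coord_deriv by blast

lemma bumpGen_dderiv: "g \<in> bumpGen x0 R \<Longrightarrow> dderiv b g \<in> alg (bumpGen x0 R)"
proof -
  assume "g \<in> bumpGen x0 R"
  then consider P where "g = (\<lambda>x. bet P (qf x0 R x))" | c where "g = (\<lambda>x. (x - x0) \<bullet> c)"
    unfolding bumpGen_def by blast
  then show ?thesis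
  proof cases
    case 1
    show ?thesis unfolding 1 dderiv_betq
      by (intro alg.mult alg.gen alg.const) (auto simp: bumpGen_def)
  next
    case 2
    show ?thesis unfolding 2 dderiv_coord by (rule alg.const)
  qed
qed

lemma smooth_bump: "smooth_fun (bump x0 R)"
proof (rule alg_smooth[where Gen="bumpGen x0 R"])
  show "bump x0 R \<in> alg (bumpGen x0 R)"
    unfolding bump_def[abs_def] by (rule alg.gen) (auto simp: bumpGen_def)
qed (auto intro: bumpGen_diff bumpGen_dderiv)

definition lap :: "('a::euclidean_space \<Rightarrow> real) \<Rightarrow> 'a \<Rightarrow> real" where
  "lap f x = (\<Sum>b\<in>Basis. dderiv b (dderiv b f) x)"

lemma lap_bump: fixes x0 :: "'a::euclidean_space" shows "lap (bump x0 R) x =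
   4 * bet (betQ (betQ 1)) (qf x0 R x) * ((x - x0) \<bullet> (x - x0))
   - 2 * real DIM('a) * bet (betQ 1) (qf x0 R x)"
proof -
  have e: "dderiv b (dderiv b (bump x0 R)) x =
     4 * bet (betQ (betQ 1)) (qf x0 R x) * ((x - x0) \<bullet> b)\<^sup>2 - 2 * bet (betQ 1) (qf x0 R x)"
    if "b \<in> Basis" for b :: 'a
  proof -
    have "dderiv b (bump x0 R) = (\<lambda>x. bet (betQ 1) (qf x0 R x) * ((-2) * ((x - x0) \<bullet> b)))"
      unfolding bump_def[abs_def] by (rule dderiv_betq)
    moreover have "((\<lambda>x. bet (betQ 1) (qf x0 R x) * ((-2) * ((x - x0) \<bullet> b))) has_derivative
        (\<lambda>h. bet (betQ 1) (qf x0 R x) * ((-2) * (h \<bullet> b)) +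
             (- (2 * ((x - x0) \<bullet> h)) * bet (betQ (betQ 1)) (qf x0 R x)) * ((-2) * ((x - x0) \<bullet> b)))) (at x)"
      by (rule has_derivative_mult[OF betq_deriv has_derivative_mult[OF has_derivative_const coord_deriv], THEN has_derivative_eq_rhs])
         (auto simp: algebra_simps)
    ultimately show ?thesis
      using that by (simp add: dderiv_at power2_eq_square algebra_simps inner_commute)
  qed
  have s: "(\<Sum>b\<in>Basis. ((x - x0) \<bullet> b)\<^sup>2) = (x - x0) \<bullet> (x - x0)"
    by (subst euclidean_inner[of "x - x0" "x - x0"]) (simp add: power2_eq_square)
  have "lap (bump x0 R) x = (\<Sum>b\<in>Basis. 4 * bet (betQ (betQ 1)) (qf x0 R x) * ((x - x0) \<bullet> b)\<^sup>2 - 2 * bet (betQ 1) (qf x0 R x))"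
    unfolding lap_def by (rule sum.cong[OF refl]) (rule e)
  also have "\<dots> = 4 * bet (betQ (betQ 1)) (qf x0 R x) * (\<Sum>b\<in>Basis. ((x - x0) \<bullet> b)\<^sup>2) - real DIM('a) * (2 * bet (betQ 1) (qf x0 R x))"
    by (simp only: sum_subtractf sum_distrib_left[symmetric] sum_constant)
  finally show ?thesis unfolding s by simp
qed

lemma poly_betQ: "poly (betQ P) y = y\<^sup>2 * (poly P y - poly (pderiv P) y)"
  by (simp add: betQ_def power2_eq_square)

lemma poly_betQ1: "poly (betQ 1) y = y\<^sup>2"
  by (simp add: poly_betQ)

lemma pderiv_betQ1: "pderiv (betQ 1) = [:0,2:]"
  by (simp add: betQ_def pderiv_pCons)

lemma poly_betQ2: "poly (betQ (betQ 1)) y = y^4 - 2*y^3"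
  by (simp add: poly_betQ pderiv_betQ1 poly_betQ1 algebra_simps power2_eq_square power3_eq_cube power4_eq_xxxx)

lemma bet_nonneg_1: "bet 1 s \<ge> 0" by (simp add: bet_def)

lemma quartic_bound:
  fixes R t n :: real
  assumes "R > 0" "t > 0" "n \<ge> 0"
  defines "c \<equiv> (8*R\<^sup>2+4)\<^sup>2/(4*R\<^sup>2) + 2*n"
  shows "2*n*t\<^sup>2 - 4*R\<^sup>2*t^4 + (8*R\<^sup>2+4)*t^3 - 8*t\<^sup>2 \<le> c\<^sup>2/(12*R\<^sup>2)"
proof -
  define a where "a = 8*R\<^sup>2+4"
  have h1: "a * t^3 \<le> R\<^sup>2*t^4 + a\<^sup>2*t\<^sup>2/(4*R\<^sup>2)"
  proof -
    have "0 \<le> (R*t\<^sup>2 - a*t/(2*R))\<^sup>2" by simp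
    then show ?thesis using assms(1)
      by (simp add: power2_eq_square power3_eq_cube power4_eq_xxxx field_simps)
  qed
  have h2: "-3*R\<^sup>2*(t\<^sup>2)\<^sup>2 + c*t\<^sup>2 \<le> c\<^sup>2/(12*R\<^sup>2)"
  proof -
    have "0 \<le> (6*R\<^sup>2*t\<^sup>2 - c)\<^sup>2" by simp
    then show ?thesis using assms(1)
      by (simp add: power2_eq_square field_simps)
  qed
  have h3: "0 \<le> 8*t\<^sup>2" by simp
  have "2*n*t\<^sup>2 - 4*R\<^sup>2*t^4 + a*t^3 - 8*t\<^sup>2 \<le> 2*n*t\<^sup>2 - 4*R\<^sup>2*t^4 + (R\<^sup>2*t^4 + a\<^sup>2*t\<^sup>2/(4*R\<^sup>2))"
    using h1 h3 by linarith
  also have "\<dots> = -3*R\<^sup>2*(t\<^sup>2)\<^sup>2 + c*t\<^sup>2"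
    unfolding c_def a_def[symmetric] by (simp add: power2_eq_square power4_eq_xxxx algebra_simps)
  finally have "2*n*t\<^sup>2 - 4*R\<^sup>2*t^4 + a*t^3 - 8*t\<^sup>2 \<le> -3*R\<^sup>2*(t\<^sup>2)\<^sup>2 + c*t\<^sup>2" .
  then show ?thesis using h2 unfolding a_def by linarith
qed

definition bumpK :: "real \<Rightarrow> real \<Rightarrow> real" where
  "bumpK R n = ((8*R\<^sup>2+4)\<^sup>2/(4*R\<^sup>2) + 2*n)\<^sup>2/(12*R\<^sup>2)"

lemma lap_bump_bound:
  fixes x0 :: "'a::euclidean_space"
  assumes "R > 0"
  shows "- lap (bump x0 R) x \<le> bumpK R (real DIM('a)) * bump x0 R x"
proof (cases "qf x0 R x > 0")
  case False
  then show ?thesis by (simp add: lap_bump bump_def bet_def)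
next
  case True
  define s where "s = qf x0 R x"
  define t where "t = 1/s"
  define e where "e = exp (-1/s)"
  have s: "s > 0" using True s_def by simp
  have t: "t > 0" using s t_def by simp
  have e: "e > 0" using e_def by simp
  have d: "(x - x0) \<bullet> (x - x0) = R\<^sup>2 - 1/t"
    using s_def t_def s unfolding qf_def by simp
  have "- lap (bump x0 R) x = e * (2 * real DIM('a) * t\<^sup>2 - 4 * (t^4 - 2*t^3) * (R\<^sup>2 - 1/t))"
    unfolding lap_bump d[symmetric] using s
    by (simp add: bet_def poly_betQ1 poly_betQ2 s_def[symmetric] t_def e_def algebra_simps)
  also have "2 * real DIM('a) * t\<^sup>2 - 4 * (t^4 - 2*t^3) * (R\<^sup>2 - 1/t) =
      2*real DIM('a)*t\<^sup>2 - 4*R\<^sup>2*t^4 + (8*R\<^sup>2+4)*t^3 - 8*t\<^sup>2"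
    using t by (simp add: power2_eq_square power3_eq_cube power4_eq_xxxx field_simps)
  also have "e * \<dots> \<le> e * bumpK R (real DIM('a))"
    unfolding bumpK_def
    by (rule mult_left_mono[OF quartic_bound]) (use assms t e in auto)
  also have "e = bump x0 R x" using s by (simp add: bump_def bet_def s_def e_def)
  finally show ?thesis by (simp add: mult.commute)
qed

lemma bump_nonneg: "bump x0 R x \<ge> 0"
  by (simp add: bump_def bet_def)

lemma bump_zero: assumes "R > 0" "x \<notin> ball x0 R" shows "bump x0 R x = 0"
proof -
  have "R \<le> norm (x - x0)" using assms by (simp add: dist_norm norm_minus_commute)
  then have "R\<^sup>2 \<le> (norm (x - x0))\<^sup>2" using assms(1) by (intro power_mono) auto
  then show ?thesis unfolding bump_def bet_def qf_def dot_square_norm by auto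
qed

lemma bump_pos:
  assumes "\<rho> > 0" "x \<in> ball x0 (\<rho>/2)"
  shows "bump x0 (3*\<rho>/4) x \<ge> exp (-16/(5*\<rho>\<^sup>2))"
proof -
  have n: "norm (x - x0) < \<rho>/2" using assms by (simp add: dist_norm norm_minus_commute)
  then have "(norm (x - x0))\<^sup>2 \<le> (\<rho>/2)\<^sup>2"
    by (intro power_mono) auto
  then have q: "qf x0 (3*\<rho>/4) x \<ge> 5*\<rho>\<^sup>2/16"
    unfolding qf_def dot_square_norm by (simp add: power2_eq_square field_simps)
  have "5*\<rho>\<^sup>2/16 > 0" using assms(1) by simp
  then have qp: "qf x0 (3*\<rho>/4) x > 0" using q by linarith
  have "-16/(5*\<rho>\<^sup>2) \<le> -1 / qf x0 (3*\<rho>/4) x"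
    using q qp assms(1) by (simp add: field_simps)
  then show ?thesis using qp by (simp add: bump_def bet_def)
qed

lemma smooth_diff: "smooth_fun f \<Longrightarrow> f differentiable (at x)"
  unfolding smooth_fun_def by (metis empty_subsetI foldr_Nil id_apply list.set(1))

lemma smooth_dderiv:
  assumes "smooth_fun f" "b \<in> Basis" shows "smooth_fun (dderiv b f)"
proof -
  have "foldr dderiv vs (dderiv b f) differentiable at x" if "set vs \<subseteq> Basis" for vs x
  proof -
    have "set (vs @ [b]) \<subseteq> Basis" using that assms(2) by auto
    then have "foldr dderiv (vs @ [b]) f differentiable at x" using assms(1) unfolding smooth_fun_def by blast
    then show ?thesis by simp
  qed
  then show ?thesis unfolding smooth_fun_def by blast
qed

lemma smooth_cont: "smooth_fun f \<Longrightarrow> continuous_on UNIV f"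
  by (meson continuous_at_imp_continuous_on differentiable_imp_continuous_within smooth_diff)

definition derivs :: "('a::euclidean_space \<Rightarrow> real) \<Rightarrow> ('a \<Rightarrow> real) set" where
  "derivs f = {foldr dderiv vs f | vs. set vs \<subseteq> Basis}"

lemma derivs_self: "f \<in> derivs f"
  unfolding derivs_def by (rule CollectI, rule exI[of _ "[]"]) simp

lemma derivs_diff: "smooth_fun f \<Longrightarrow> g \<in> derivs f \<Longrightarrow> g differentiable (at x)"
  unfolding derivs_def smooth_fun_def by auto

lemma derivs_dderiv: "g \<in> derivs f \<Longrightarrow> b \<in> Basis \<Longrightarrow> dderiv b g \<in> derivs f"
proof -
  assume "g \<in> derivs f" "b \<in> Basis"
  then obtain vs where "g = foldr dderiv vs f" "set vs \<subseteq> Basis" unfolding derivs_def by auto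
  then show ?thesis unfolding derivs_def using \<open>b \<in> Basis\<close> by (auto intro!: exI[of _ "b # vs"])
qed

lemma smooth_mult:
  assumes "smooth_fun f" "smooth_fun g"
  shows "smooth_fun (\<lambda>x. f x * g x)"
proof (rule alg_smooth[where Gen="derivs f \<union> derivs g"])
  show "(\<lambda>x. f x * g x) \<in> alg (derivs f \<union> derivs g)"
    by (intro alg.mult alg.gen) (auto simp: derivs_self)
qed (use assms derivs_diff derivs_dderiv alg.gen in blast)+

definition rsm :: "(nat \<Rightarrow> real \<Rightarrow> real) \<Rightarrow> bool" where
  "rsm Fs \<longleftrightarrow> (\<forall>k t. (Fs k has_real_derivative Fs (Suc k) t) (at t))"

lemma smooth_comp:
  assumes "rsm Fs" "smooth_fun \<phi>"
  shows "smooth_fun (\<lambda>x. Fs k (\<phi> x))"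
proof (rule alg_smooth[where Gen="range (\<lambda>k x. Fs k (\<phi> x)) \<union> derivs \<phi>"])
  show "(\<lambda>x. Fs k (\<phi> x)) \<in> alg (range (\<lambda>k x. Fs k (\<phi> x)) \<union> derivs \<phi>)"
    by (intro alg.gen) auto
  have d: "((\<lambda>x. Fs k (\<phi> x)) has_derivative (\<lambda>h. frechet_derivative \<phi> (at x) h * Fs (Suc k) (\<phi> x))) (at x)" for k x
    by (rule DERIV_compose_FDERIV) (use assms in \<open>auto simp: rsm_def frechet_derivative_works[symmetric] smooth_diff\<close>)
  fix g x assume "g \<in> range (\<lambda>k x. Fs k (\<phi> x)) \<union> derivs \<phi>"
  then show "g differentiable (at x)" using d derivs_diff[OF assms(2)] differentiable_def by blast
next
  have d: "((\<lambda>x. Fs k (\<phi> x)) has_derivative (\<lambda>h. frechet_derivative \<phi> (at x) h * Fs (Suc k) (\<phi> x))) (at x)" for k x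
    by (rule DERIV_compose_FDERIV) (use assms in \<open>auto simp: rsm_def frechet_derivative_works[symmetric] smooth_diff\<close>)
  fix g and b :: 'a assume g: "g \<in> range (\<lambda>k x. Fs k (\<phi> x)) \<union> derivs \<phi>" and b: "b \<in> Basis"
  show "dderiv b g \<in> alg (range (\<lambda>k x. Fs k (\<phi> x)) \<union> derivs \<phi>)"
  proof (cases "g \<in> derivs \<phi>")
    case True then show ?thesis using derivs_dderiv[OF True b] by (auto intro: alg.gen)
  next
    case False
    then obtain k where gk: "g = (\<lambda>x. Fs k (\<phi> x))" using g by auto
    have "dderiv b g = (\<lambda>x. dderiv b \<phi> x * Fs (Suc k) (\<phi> x))"
      unfolding gk by (rule ext) (simp add: dderiv_at[OF d] dderiv_def)
    moreover have "dderiv b \<phi> \<in> derivs \<phi>" using derivs_dderiv[OF derivs_self b] .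
    moreover have "(\<lambda>x. Fs (Suc k) (\<phi> x)) \<in> range (\<lambda>k x. Fs k (\<phi> x))" by auto
    ultimately have "(\<lambda>x. dderiv b \<phi> x * Fs (Suc k) (\<phi> x)) \<in> alg (range (\<lambda>k x. Fs k (\<phi> x)) \<union> derivs \<phi>)"
      using alg.mult[where f="dderiv b \<phi>" and g="\<lambda>x. Fs (Suc k) (\<phi> x)" and Gen="range (\<lambda>k x. Fs k (\<phi> x)) \<union> derivs \<phi>"]
        alg.gen[where Gen="range (\<lambda>k x. Fs k (\<phi> x)) \<union> derivs \<phi>"] by blast
    then show ?thesis using \<open>dderiv b g = _\<close> by simp
  qed
qed

lemma lipschitz_deriv:
  fixes F F' :: "real \<Rightarrow> real"
  assumes "\<And>t. (F has_real_derivative F' t) (at t)" "\<And>t. \<bar>F' t\<bar> \<le> L"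
  shows "\<bar>F a - F b\<bar> \<le> L * \<bar>a - b\<bar>"
proof -
  have *: "\<bar>F y - F x\<bar> \<le> L * \<bar>y - x\<bar>" if "x < y" for x y
  proof -
    have "\<exists>z>x. z < y \<and> F y - F x = (y - x) * F' z" by (rule MVT2[OF that]) (rule assms(1))
    then obtain z where "F y - F x = (y - x) * F' z" by blast
    then have "\<bar>F y - F x\<bar> = \<bar>y - x\<bar> * \<bar>F' z\<bar>" by (simp add: abs_mult)
    also have "\<dots> \<le> \<bar>y - x\<bar> * L" by (rule mult_left_mono[OF assms(2)]) simp
    finally show ?thesis by (simp add: mult.commute)
  qed
  show ?thesis
    using *[of a b] *[of b a] by (cases a b rule: linorder_cases) (auto simp: abs_minus_commute)
qed

definition Fe :: "real \<Rightarrow> real \<Rightarrow> real \<Rightarrow> real" where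
  "Fe \<eta> \<epsilon> t = exp (\<eta> * t) / (1 + \<epsilon> * exp (\<eta> * t))"

definition He :: "real \<Rightarrow> real \<Rightarrow> real \<Rightarrow> real" where
  "He \<eta> \<epsilon> t = ln (1 + \<epsilon> * exp (\<eta> * t)) / (\<epsilon> * \<eta>)"

definition Fd :: "real \<Rightarrow> real \<Rightarrow> real \<Rightarrow> real" where
  "Fd \<eta> \<epsilon> t = \<eta> * Fe \<eta> \<epsilon> t - \<eta> * \<epsilon> * (Fe \<eta> \<epsilon> t)\<^sup>2"

lemma aux_id1: "(d::real) \<noteq> 0 \<Longrightarrow> ((\<eta> * e) * d - e * (\<epsilon> * (\<eta> * e))) / d\<^sup>2 = \<eta> * (e / d) - \<eta> * \<epsilon> * (e/d)\<^sup>2"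
  by (simp add: field_simps power2_eq_square)

lemma aux_id2: "(d::real) \<noteq> 0 \<Longrightarrow> \<epsilon> \<noteq> 0 \<Longrightarrow> \<eta> \<noteq> 0 \<Longrightarrow> (\<epsilon> * (\<eta> * e)) / d / (\<epsilon> * \<eta>) = e / d"
  by (simp add: field_simps)

lemma Fe_deriv: assumes "\<epsilon> > 0" shows "(Fe \<eta> \<epsilon> has_real_derivative Fd \<eta> \<epsilon> t) (at t)"
proof -
  have p: "1 + \<epsilon> * exp (\<eta> * t) > 0" using assms by (simp add: add_pos_pos)
  have "(Fe \<eta> \<epsilon> has_real_derivative
     ((\<eta> * exp (\<eta> * t)) * (1 + \<epsilon> * exp (\<eta> * t)) - exp (\<eta> * t) * (\<epsilon> * (\<eta> * exp (\<eta> * t)))) /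
       (1 + \<epsilon> * exp (\<eta> * t))\<^sup>2) (at t)"
    unfolding Fe_def[abs_def] using p
    by (auto intro!: derivative_eq_intros simp: power2_eq_square)
  moreover have "((\<eta> * exp (\<eta> * t)) * (1 + \<epsilon> * exp (\<eta> * t)) - exp (\<eta> * t) * (\<epsilon> * (\<eta> * exp (\<eta> * t)))) /
       (1 + \<epsilon> * exp (\<eta> * t))\<^sup>2 = Fd \<eta> \<epsilon> t"
    unfolding Fd_def Fe_def using p by (intro aux_id1) simp
  ultimately show ?thesis by simp
qed

lemma He_deriv: assumes "\<epsilon> > 0" "\<eta> > 0" shows "(He \<eta> \<epsilon> has_real_derivative Fe \<eta> \<epsilon> t) (at t)"
proof -
  have p: "1 + \<epsilon> * exp (\<eta> * t) > 0" using assms by (simp add: add_pos_pos)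
  have "(He \<eta> \<epsilon> has_real_derivative (\<epsilon> * (\<eta> * exp (\<eta> * t))) / (1 + \<epsilon> * exp (\<eta> * t)) / (\<epsilon> * \<eta>)) (at t)"
    unfolding He_def[abs_def] using p
    by (auto intro!: derivative_eq_intros)
  moreover have "(\<epsilon> * (\<eta> * exp (\<eta> * t))) / (1 + \<epsilon> * exp (\<eta> * t)) / (\<epsilon> * \<eta>) = Fe \<eta> \<epsilon> t"
    unfolding Fe_def using assms p by (intro aux_id2) auto
  ultimately show ?thesis by simp
qed

primrec fp :: "real \<Rightarrow> real \<Rightarrow> nat \<Rightarrow> real poly" where
  "fp \<eta> \<epsilon> 0 = [:0,1:]"
| "fp \<eta> \<epsilon> (Suc k) = pderiv (fp \<eta> \<epsilon> k) * [:0, \<eta>, -\<eta>*\<epsilon>:]"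

definition FeS :: "real \<Rightarrow> real \<Rightarrow> nat \<Rightarrow> real \<Rightarrow> real" where
  "FeS \<eta> \<epsilon> k t = poly (fp \<eta> \<epsilon> k) (Fe \<eta> \<epsilon> t)"

definition HeS :: "real \<Rightarrow> real \<Rightarrow> nat \<Rightarrow> real \<Rightarrow> real" where
  "HeS \<eta> \<epsilon> k = (case k of 0 \<Rightarrow> He \<eta> \<epsilon> | Suc j \<Rightarrow> FeS \<eta> \<epsilon> j)"

lemma FeS0: "FeS \<eta> \<epsilon> 0 = Fe \<eta> \<epsilon>"
  by (rule ext) (simp add: FeS_def)

lemma FeS1: "FeS \<eta> \<epsilon> 1 = Fd \<eta> \<epsilon>"
  by (rule ext) (simp add: FeS_def Fd_def power2_eq_square algebra_simps pderiv_pCons)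

lemma rsm_FeS: assumes "\<epsilon> > 0" shows "rsm (FeS \<eta> \<epsilon>)"
  unfolding rsm_def
proof (intro allI)
  fix k t
  have "((\<lambda>t. poly (fp \<eta> \<epsilon> k) (Fe \<eta> \<epsilon> t)) has_real_derivative
      poly (pderiv (fp \<eta> \<epsilon> k)) (Fe \<eta> \<epsilon> t) * Fd \<eta> \<epsilon> t) (at t)"
    by (rule DERIV_chain2[OF poly_DERIV Fe_deriv[OF assms]])
  moreover have "poly (pderiv (fp \<eta> \<epsilon> k)) (Fe \<eta> \<epsilon> t) * Fd \<eta> \<epsilon> t = FeS \<eta> \<epsilon> (Suc k) t"
    by (simp add: FeS_def Fd_def power2_eq_square algebra_simps)
  ultimately show "(FeS \<eta> \<epsilon> k has_real_derivative FeS \<eta> \<epsilon> (Suc k) t) (at t)"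
    unfolding FeS_def[of _ _ k] by simp
qed

lemma rsm_HeS: assumes "\<epsilon> > 0" "\<eta> > 0" shows "rsm (HeS \<eta> \<epsilon>)"
  unfolding rsm_def
proof (intro allI)
  fix k t show "(HeS \<eta> \<epsilon> k has_real_derivative HeS \<eta> \<epsilon> (Suc k) t) (at t)"
  proof (cases k)
    case 0 then show ?thesis using He_deriv[OF assms] by (simp add: HeS_def FeS0)
  next
    case (Suc j) then show ?thesis using rsm_FeS[OF assms(1)] by (simp add: HeS_def rsm_def)
  qed
qed

lemma smooth_Fe: assumes "\<epsilon> > 0" "smooth_fun \<phi>" shows "smooth_fun (\<lambda>x. Fe \<eta> \<epsilon> (\<phi> x))"
  using smooth_comp[OF rsm_FeS[OF assms(1), of \<eta>] assms(2), where k=0] by (simp add: FeS0)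

lemma smooth_He: assumes "\<epsilon> > 0" "\<eta> > 0" "smooth_fun \<phi>" shows "smooth_fun (\<lambda>x. He \<eta> \<epsilon> (\<phi> x))"
  using smooth_comp[OF rsm_HeS[OF assms(1,2)] assms(3), where k=0] by (simp add: HeS_def)

context fixes \<eta> \<epsilon> :: real assumes ep: "\<epsilon> > 0" and et: "\<eta> > 0" begin

lemma Fe_pos: "Fe \<eta> \<epsilon> t > 0"
  unfolding Fe_def using ep by (simp add: add_pos_pos)

lemma eFe_lt1: "\<epsilon> * Fe \<eta> \<epsilon> t < 1"
  unfolding Fe_def using ep by (simp add: add_pos_pos field_simps)

lemma Fe_le: "Fe \<eta> \<epsilon> t \<le> 1/\<epsilon>"
  using eFe_lt1[of t] ep by (simp add: field_simps)

lemma Fd_nonneg: "Fd \<eta> \<epsilon> t \<ge> 0"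
proof -
  have "Fd \<eta> \<epsilon> t = \<eta> * Fe \<eta> \<epsilon> t * (1 - \<epsilon> * Fe \<eta> \<epsilon> t)"
    by (simp add: Fd_def power2_eq_square algebra_simps)
  then show ?thesis using Fe_pos[of t] eFe_lt1[of t] et by simp
qed

lemma Fd_le: "Fd \<eta> \<epsilon> t \<le> \<eta> * Fe \<eta> \<epsilon> t"
  unfolding Fd_def using ep et by simp

lemma Fd_bound: "\<bar>Fd \<eta> \<epsilon> t\<bar> \<le> \<eta> / \<epsilon>"
proof -
  have "\<eta> * Fe \<eta> \<epsilon> t \<le> \<eta> * (1/\<epsilon>)" using Fe_le et by (intro mult_left_mono) auto
  then show ?thesis using Fd_nonneg[of t] Fd_le[of t] by simp
qed

lemma Fe_bound: "\<bar>Fe \<eta> \<epsilon> t\<bar> \<le> 1 / \<epsilon>"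
  using Fe_pos[of t] Fe_le[of t] by simp

lemma He_nonneg: "He \<eta> \<epsilon> t \<ge> 0"
  unfolding He_def using ep et by (intro divide_nonneg_pos) auto

lemma He_le: "He \<eta> \<epsilon> t \<le> exp (\<eta> * t) / \<eta>"
proof -
  have "ln (1 + \<epsilon> * exp (\<eta> * t)) \<le> \<epsilon> * exp (\<eta> * t)"
    by (rule ln_add_one_self_le_self) (use ep in simp)
  then show ?thesis unfolding He_def using ep et by (simp add: field_simps)
qed

lemma Fe_lip: "\<bar>Fe \<eta> \<epsilon> a - Fe \<eta> \<epsilon> b\<bar> \<le> (\<eta>/\<epsilon>) * \<bar>a - b\<bar>"
  by (rule lipschitz_deriv[OF Fe_deriv[OF ep] Fd_bound])

lemma He_lip: "\<bar>He \<eta> \<epsilon> a - He \<eta> \<epsilon> b\<bar> \<le> (1/\<epsilon>) * \<bar>a - b\<bar>"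
  by (rule lipschitz_deriv[OF He_deriv[OF ep et] Fe_bound])

lemma Fd_cont: "continuous_on UNIV (Fd \<eta> \<epsilon>)"
  using rsm_FeS[OF ep] unfolding rsm_def FeS1[symmetric]
  by (meson DERIV_isCont continuous_at_imp_continuous_on)

lemma Fe_cont: "continuous_on UNIV (Fe \<eta> \<epsilon>)"
  by (meson DERIV_isCont Fe_deriv continuous_at_imp_continuous_on ep)

lemma He_cont: "continuous_on UNIV (He \<eta> \<epsilon>)"
  by (meson DERIV_isCont He_deriv continuous_at_imp_continuous_on ep et)

end

lemma Fe_lower:
  assumes "\<eta> > 0" "0 \<le> t" "t \<le> M"
  shows "Fe \<eta> (exp (-\<eta>*M)) t \<ge> exp (\<eta> * t) / 2"
proof -
  have "exp (-\<eta>*M) * exp (\<eta> * t) = exp (\<eta> * (t - M))" by (simp add: exp_add[symmetric] algebra_simps)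
  also have "\<dots> \<le> 1" using assms by (simp add: mult_nonneg_nonpos)
  finally have "1 + exp (-\<eta>*M) * exp (\<eta> * t) \<le> 2" by simp
  then show ?thesis unfolding Fe_def by (simp add: field_simps add_pos_pos)
qed

lemma deriv_zero_outside:
  assumes "compact K" "\<And>x. x \<notin> K \<Longrightarrow> g x = 0" "x \<notin> K"
  shows "dderiv b g x = 0"
proof -
  have "((\<lambda>x. 0) has_derivative (\<lambda>h. 0)) (at x)" by simp
  then have "(g has_derivative (\<lambda>h. 0)) (at x)"
    by (rule has_derivative_transform_within_open[where s="- K"])
       (use assms compact_imp_closed in auto)
  then show ?thesis by (simp add: dderiv_at)
qed

lemma compact_support_bound:
  fixes f :: "'a::euclidean_space \<Rightarrow> real"
  assumes "compact K" "continuous_on UNIV f" "\<And>x. x \<notin> K \<Longrightarrow> f x = 0"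
  shows "\<exists>L\<ge>0. \<forall>x. \<bar>f x\<bar> \<le> L"
proof -
  have "compact (f ` K)" by (rule compact_continuous_image) (use assms continuous_on_subset in blast)+
  then obtain L where L: "\<forall>y\<in>f ` K. norm y \<le> L" using compact_imp_bounded bounded_iff by metis
  show ?thesis
  proof (intro exI[of _ "max L 0"] conjI allI)
    fix x show "\<bar>f x\<bar> \<le> max L 0" using L assms(3)[of x] by (cases "x \<in> K") auto
  qed simp
qed

lemma ray_deriv:
  assumes "g differentiable (at (x + s *\<^sub>R b))"
  shows "((\<lambda>s. g (x + s *\<^sub>R b)) has_real_derivative dderiv b g (x + s *\<^sub>R b)) (at s)"
proof -
  let ?g' = "frechet_derivative g (at (x + s *\<^sub>R b))"
  have gd: "(g has_derivative ?g') (at (x + s *\<^sub>R b))" using assms frechet_derivative_works by blast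
  have "((\<lambda>s. x + s *\<^sub>R b) has_derivative (\<lambda>t. t *\<^sub>R b)) (at s)"
    by (auto intro!: derivative_eq_intros)
  from diff_chain_at[OF this gd]
  have "((\<lambda>s. g (x + s *\<^sub>R b)) has_derivative (\<lambda>t. ?g' (t *\<^sub>R b))) (at s)" by (simp add: o_def)
  moreover have "(\<lambda>t. ?g' (t *\<^sub>R b)) = (\<lambda>t. dderiv b g (x + s *\<^sub>R b) * t)"
    using linear_frechet_derivative[OF assms] by (auto simp: dderiv_def linear_scale)
  ultimately show ?thesis by (simp add: has_field_derivative_def)
qed

lemma lborel_translate:
  fixes g :: "'a::euclidean_space \<Rightarrow> real"
  assumes "g \<in> borel_measurable borel"
  shows "integral\<^sup>L lborel (\<lambda>x. g (x + c)) = integral\<^sup>L lborel g"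
proof -
  have "integral\<^sup>L lborel g = integral\<^sup>L (distr lborel borel ((+) c)) g" by (simp add: lborel_distr_plus)
  also have "\<dots> = integral\<^sup>L lborel (\<lambda>x. g (c + x))" by (rule integral_distr) (use assms in auto)
  finally show ?thesis by (simp add: add.commute)
qed

lemma integrable_translate:
  fixes g :: "'a::euclidean_space \<Rightarrow> real"
  assumes "integrable lborel g"
  shows "integrable lborel (\<lambda>x. g (x + c))"
proof -
  have "integrable (distr lborel borel ((+) c)) g" using assms by (simp add: lborel_distr_plus)
  then have "integrable lborel (\<lambda>x. g (c + x))"
    by (subst (asm) integrable_distr_eq) (use assms in auto)
  then show ?thesis by (simp add: add.commute)
qed

lemma ibp:
  fixes g :: "'a::euclidean_space \<Rightarrow> real"
  assumes diff: "\<And>x. g differentiable (at x)" and cont: "continuous_on UNIV (dderiv b g)"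
    and K: "compact K" "\<And>x. x \<notin> K \<Longrightarrow> g x = 0" and b: "b \<in> Basis"
  shows "integral\<^sup>L lborel (dderiv b g) = 0"
proof -
  define D where "D = dderiv b g"
  have gc: "continuous_on UNIV g"
    using diff by (meson continuous_at_imp_continuous_on differentiable_imp_continuous_within)
  have Dz: "\<And>x. x \<notin> K \<Longrightarrow> D x = 0" unfolding D_def using deriv_zero_outside[OF K(1), of g] K(2) by blast
  obtain L where L: "L \<ge> 0" "\<And>x. \<bar>D x\<bar> \<le> L"
    using compact_support_bound[OF K(1) cont[folded D_def] Dz] by blast
  obtain B where Bg: "\<And>x. \<bar>g x\<bar> \<le> B"
    using compact_support_bound[OF K(1) gc K(2)] by blast
  obtain r where r: "\<And>x. x \<in> K \<Longrightarrow> norm x \<le> r"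
    using compact_imp_bounded[OF K(1)] bounded_iff by metis
  define K' where "K' = cball (0::'a) (r + 1)"
  have nb: "norm b = 1" using b by simp
  have lip: "\<bar>g (x + t *\<^sub>R b) - g x\<bar> \<le> L * \<bar>t\<bar>" for x t
    using lipschitz_deriv[where F="\<lambda>s. g (x + s *\<^sub>R b)" and F'="\<lambda>s. D (x + s *\<^sub>R b)" and L=L and a=t and b=0]
      ray_deriv[OF diff] L(2) unfolding D_def by simp
  define tn where "tn n = 1 / (real n + 1)" for n :: nat
  have tn: "tn n > 0" "tn n \<le> 1" for n unfolding tn_def by (auto simp: field_simps)
  define s where "s n x = (g (x + tn n *\<^sub>R b) - g x) / tn n" for n x
  have gm: "g \<in> borel_measurable borel" using gc by (rule borel_measurable_continuous_onI)
  have Dm: "D \<in> borel_measurable lborel" using cont unfolding D_def using borel_measurable_continuous_onI by simp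
  have K'm: "K' \<in> sets lborel" unfolding K'_def by simp
  have K'f: "emeasure lborel K' < \<infinity>" unfolding K'_def by (rule emeasure_bounded_finite) simp
  have wint: "integrable lborel (\<lambda>x. L * indicator K' x)"
    using K'm K'f by (intro integrable_mult_right) auto
  have gint: "integrable lborel g"
  proof (rule Bochner_Integration.integrable_bound)
    show "g \<in> borel_measurable lborel" using gm by simp
    show "integrable lborel (\<lambda>x. B * indicator K' x)"
      using K'm K'f by (intro integrable_mult_right) auto
    show "AE x in lborel. norm (g x) \<le> norm (B * indicator K' x)"
    proof (rule AE_I2)
      fix x show "norm (g x) \<le> norm (B * indicator K' x)"
      proof (cases "x \<in> K")
        case True then have "x \<in> K'" using r[of x] by (auto simp: K'_def)
        then show ?thesis using Bg[of x] by auto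
      qed (simp add: K(2))
    qed
  qed
  have sm: "s n \<in> borel_measurable lborel" for n
    unfolding s_def using gm by measurable
  have lim: "(\<lambda>n. s n x) \<longlonglongrightarrow> D x" for x
  proof -
    have "((\<lambda>t. (g (x + t *\<^sub>R b) - g (x + 0 *\<^sub>R b)) / (t - 0)) \<longlongrightarrow> D x) (at 0)"
      using ray_deriv[OF diff, of x b 0] unfolding has_field_derivative_iff D_def by simp
    moreover have "filterlim tn (at 0) sequentially"
    proof (subst filterlim_at, intro conjI)
      show "\<forall>\<^sub>F n in sequentially. tn n \<in> UNIV \<and> tn n \<noteq> 0"
        using tn by (intro always_eventually) (metis UNIV_I less_irrefl)
      show "tn \<longlonglongrightarrow> 0" unfolding tn_def using LIMSEQ_inverse_real_of_nat_add[of 0]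
        by (simp add: divide_inverse add.commute)
    qed
    ultimately have "((\<lambda>n. (g (x + tn n *\<^sub>R b) - g (x + 0 *\<^sub>R b)) / (tn n - 0)) \<longlonglongrightarrow> D x)"
      by (rule filterlim_compose)
    then show ?thesis unfolding s_def by simp
  qed
  have bound: "norm (s n x) \<le> L * indicator K' x" for n x
  proof (cases "x \<in> K'")
    case True
    have "\<bar>s n x\<bar> \<le> L" unfolding s_def using lip[of x "tn n"] tn[of n]
      by (simp add: abs_divide divide_le_eq)
    then show ?thesis using True by simp
  next
    case False
    then have nx: "norm x > r + 1" unfolding K'_def by simp
    have "x \<notin> K" using nx r by force
    moreover have "x + tn n *\<^sub>R b \<notin> K"
    proof
      assume "x + tn n *\<^sub>R b \<in> K"
      then have "norm (x + tn n *\<^sub>R b) \<le> r" by (rule r)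
      moreover have "norm x \<le> norm (x + tn n *\<^sub>R b) + norm (tn n *\<^sub>R b)"
        by (metis add_diff_cancel_right' norm_triangle_ineq4)
      ultimately show False using nx tn[of n] nb by simp
    qed
    ultimately show ?thesis using False by (simp add: s_def K(2))
  qed
  have "(\<lambda>n. integral\<^sup>L lborel (s n)) \<longlonglongrightarrow> integral\<^sup>L lborel D"
    by (rule integral_dominated_convergence[OF Dm sm wint]) (use lim bound in auto)
  moreover have "integral\<^sup>L lborel (s n) = 0" for n
  proof -
    have "integral\<^sup>L lborel (s n) = (integral\<^sup>L lborel (\<lambda>x. g (x + tn n *\<^sub>R b)) - integral\<^sup>L lborel g) / tn n"
      unfolding s_def using gint integrable_translate[OF gint] by simp
    then show ?thesis using lborel_translate[OF gm] by simp
  qed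
  ultimately show ?thesis unfolding D_def by (simp add: LIMSEQ_const_iff)
qed

lemma cont_meas_leb:
  fixes f :: "'a::euclidean_space \<Rightarrow> 'b::euclidean_space"
  shows "continuous_on UNIV f \<Longrightarrow> f \<in> borel_measurable lebesgue"
  by (rule measurable_completion) (simp add: borel_measurable_continuous_onI)

lemma compact_support_bound_norm:
  fixes f :: "'a::euclidean_space \<Rightarrow> 'b::real_normed_vector"
  assumes "compact K" "continuous_on UNIV f" "\<And>x. x \<notin> K \<Longrightarrow> f x = 0"
  shows "\<exists>L\<ge>0. \<forall>x. norm (f x) \<le> L"
proof -
  have "compact (f ` K)" by (rule compact_continuous_image) (use assms continuous_on_subset in blast)+
  then obtain L where L: "\<forall>y\<in>f ` K. norm y \<le> L" using compact_imp_bounded bounded_iff by metis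
  show ?thesis
  proof (intro exI[of _ "max L 0"] conjI allI)
    fix x show "norm (f x) \<le> max L 0" using L assms(3)[of x] by (cases "x \<in> K") auto
  qed simp
qed

lemma dderiv_cont: "smooth_fun f \<Longrightarrow> b \<in> Basis \<Longrightarrow> continuous_on UNIV (dderiv b f)"
  using smooth_cont smooth_dderiv by blast

lemma cgrad_cont: "smooth_fun f \<Longrightarrow> continuous_on UNIV (cgrad f)"
  unfolding cgrad_def[abs_def]
  by (intro continuous_on_sum continuous_on_scaleR dderiv_cont continuous_on_const) auto

lemma cgrad_zero: "compact K \<Longrightarrow> (\<And>x. x \<notin> K \<Longrightarrow> f x = 0) \<Longrightarrow> x \<notin> K \<Longrightarrow> cgrad f x = 0"
  unfolding cgrad_def using deriv_zero_outside[of K f x] by simp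

lemma cgrad_inner: "cgrad f x \<bullet> cgrad g x = (\<Sum>b\<in>Basis. dderiv b f x * dderiv b g x)"
  unfolding cgrad_def by (simp add: inner_sum_left inner_sum_right inner_Basis if_distrib sum.delta mult.commute cong: if_cong)

lemma cgrad_inner_Basis: "b \<in> Basis \<Longrightarrow> cgrad f x \<bullet> b = dderiv b f x"
  unfolding cgrad_def by (simp add: inner_sum_left inner_Basis if_distrib sum.delta cong: if_cong)

lemma cgrad_eqI: "(\<And>b. b \<in> Basis \<Longrightarrow> v \<bullet> b = dderiv b f x) \<Longrightarrow> cgrad f x = v"
  by (metis cgrad_inner_Basis euclidean_eqI)

locale tf =
  fixes \<Omega> :: "'a::euclidean_space set" and f :: "'a \<Rightarrow> real"
  assumes tf: "test_fun \<Omega> f"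
begin

definition "K = (SOME K. compact K \<and> K \<subseteq> \<Omega> \<and> (\<forall>x. x \<notin> K \<longrightarrow> f x = 0))"

lemma K: "compact K" "K \<subseteq> \<Omega>" "\<And>x. x \<notin> K \<Longrightarrow> f x = 0"
proof -
  have "\<exists>K. compact K \<and> K \<subseteq> \<Omega> \<and> (\<forall>x. x \<notin> K \<longrightarrow> f x = 0)" using tf unfolding test_fun_def by blast
  from someI_ex[OF this] show "compact K" "K \<subseteq> \<Omega>" "\<And>x. x \<notin> K \<Longrightarrow> f x = 0" unfolding K_def by auto
qed

lemma smooth: "smooth_fun f" using tf unfolding test_fun_def by blast

lemma cont: "continuous_on UNIV f" using smooth smooth_cont by blast

lemma diff: "f differentiable (at x)" using smooth smooth_diff by blast

lemma gcont: "continuous_on UNIV (cgrad f)" using smooth cgrad_cont by blast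

lemma gzero: "x \<notin> K \<Longrightarrow> cgrad f x = 0" using cgrad_zero K by blast

lemma dzero: "x \<notin> K \<Longrightarrow> dderiv b f x = 0" using deriv_zero_outside K by blast

lemma bnd: "\<exists>P\<ge>0. \<forall>x. \<bar>f x\<bar> \<le> P" using compact_support_bound_norm[OF K(1) cont K(3)] by auto

lemma gbnd: "\<exists>Q\<ge>0. \<forall>x. norm (cgrad f x) \<le> Q" using compact_support_bound_norm[OF K(1) gcont gzero] by auto

lemma meas: "f \<in> borel_measurable lebesgue" using cont cont_meas_leb by blast

lemma gmeas: "cgrad f \<in> borel_measurable lebesgue" using gcont cont_meas_leb by blast

end

lemma test_fun_dderiv:
  assumes "test_fun \<Omega> f" "b \<in> Basis"
  shows "test_fun \<Omega> (dderiv b f)"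
proof -
  interpret tf \<Omega> f by (rule tf.intro) fact
  show ?thesis unfolding test_fun_def using smooth_dderiv[OF smooth assms(2)] K dzero by blast
qed

lemma test_fun_mult:
  assumes "test_fun \<Omega> f" "smooth_fun g"
  shows "test_fun \<Omega> (\<lambda>x. g x * f x)"
proof -
  interpret tf \<Omega> f by (rule tf.intro) fact
  show ?thesis unfolding test_fun_def using smooth_mult[OF assms(2) smooth] K by auto
qed

lemma norm3:
  fixes a b c :: "'a::real_normed_vector"
  shows "(norm (a + b + c))\<^sup>2 \<le> 3 * ((norm a)\<^sup>2 + (norm b)\<^sup>2 + (norm c)\<^sup>2)"
proof -
  have "norm (a+b+c) \<le> norm a + norm b + norm c"
    by (metis add_mono norm_triangle_ineq order_trans order_refl)
  then have "(norm (a+b+c))\<^sup>2 \<le> (norm a + norm b + norm c)\<^sup>2" by (simp add: power_mono)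
  also have "\<dots> \<le> 3 * ((norm a)\<^sup>2 + (norm b)\<^sup>2 + (norm c)\<^sup>2)"
  proof -
    have "0 \<le> (norm a - norm b)\<^sup>2 + (norm b - norm c)\<^sup>2 + (norm a - norm c)\<^sup>2" by simp
    then show ?thesis by (simp add: power2_eq_square algebra_simps)
  qed
  finally show ?thesis .
qed

lemma sq2: "((a::real) + b)\<^sup>2 \<le> 2 * (a\<^sup>2 + b\<^sup>2)"
proof -
  have "0 \<le> (a - b)\<^sup>2" by simp
  then show ?thesis by (simp add: power2_eq_square algebra_simps)
qed

lemma normsq2: fixes a b :: "'a::real_normed_vector" shows "(norm (a + b))\<^sup>2 \<le> 2 * ((norm a)\<^sup>2 + (norm b)\<^sup>2)"
proof -
  have "norm (a+b) \<le> norm a + norm b" by (rule norm_triangle_ineq)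
  then have "(norm (a+b))\<^sup>2 \<le> (norm a + norm b)\<^sup>2" by (simp add: power_mono)
  then show ?thesis using sq2[of "norm a" "norm b"] by linarith
qed

lemma meas_restrict:
  fixes f g :: "'a::euclidean_space \<Rightarrow> 'b::euclidean_space"
  assumes "\<Omega> \<in> sets lebesgue" "g \<in> borel_measurable lebesgue" "\<And>x. x \<in> \<Omega> \<Longrightarrow> f x = g x"
  shows "(\<lambda>x. indicator \<Omega> x *\<^sub>R f x) \<in> borel_measurable lebesgue"
proof -
  have "(\<lambda>x. indicator \<Omega> x *\<^sub>R g x) \<in> borel_measurable lebesgue"
    using assms(1,2) by (intro borel_measurable_scaleR borel_measurable_indicator) auto
  moreover have "(\<lambda>x. indicator \<Omega> x *\<^sub>R f x) = (\<lambda>x. indicator \<Omega> x *\<^sub>R g x)"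
  proof (rule ext)
    fix x show "indicator \<Omega> x *\<^sub>R f x = indicator \<Omega> x *\<^sub>R g x"
      by (cases "x \<in> \<Omega>") (simp_all add: assms(3))
  qed
  ultimately show ?thesis by simp
qed

lemma int_restrict:
  fixes f g :: "'a::euclidean_space \<Rightarrow> real"
  assumes "\<Omega> \<in> sets lebesgue" "g \<in> borel_measurable lebesgue" "\<And>x. x \<in> \<Omega> \<Longrightarrow> f x = g x"
    and "integrable lebesgue w" "\<And>x. x \<in> \<Omega> \<Longrightarrow> \<bar>f x\<bar> \<le> w x" "\<And>x. w x \<ge> 0"
  shows "integrable lebesgue (\<lambda>x. indicator \<Omega> x * f x)"
proof (rule Bochner_Integration.integrable_bound[OF assms(4)])
  show "(\<lambda>x. indicator \<Omega> x * f x) \<in> borel_measurable lebesgue"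
    using meas_restrict[OF assms(1-3)] by simp
  show "AE x in lebesgue. norm (indicator \<Omega> x * f x) \<le> norm (w x)"
    using assms(5,6) by (intro AE_I2) (auto simp: indicator_def)
qed

lemma int_cs:
  fixes g :: "'a::euclidean_space \<Rightarrow> real"
  assumes "continuous_on UNIV g" "compact K" "\<And>x. x \<notin> K \<Longrightarrow> g x = 0"
  shows "integrable lebesgue g"
proof -
  obtain B where B: "B \<ge> 0" "\<And>x. norm (g x) \<le> B" using compact_support_bound_norm[OF assms(2,1,3)] by blast
  have Km: "K \<in> sets lborel" using assms(2) compact_imp_closed borel_closed by (metis sets_lborel)
  have Kf: "emeasure lborel K < \<infinity>" using assms(2) compact_imp_bounded emeasure_bounded_finite by blast
  have gm: "g \<in> borel_measurable lborel" using assms(1) borel_measurable_continuous_onI by simp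
  have "integrable lborel g"
  proof (rule Bochner_Integration.integrable_bound[OF _ gm])
    show "integrable lborel (\<lambda>x. B * indicator K x)" using Km Kf by (intro integrable_mult_right) auto
    show "AE x in lborel. norm (g x) \<le> norm (B * indicator K x)"
      using B assms(3) by (intro AE_I2) (auto simp: indicator_def)
  qed
  then show ?thesis using integrable_completion[OF gm] by simp
qed

context tf begin

lemma int_sq: "integrable lebesgue (\<lambda>x. (f x)\<^sup>2)"
  by (rule int_cs[OF _ K(1)]) (use cont K(3) in \<open>auto intro: continuous_intros\<close>)

lemma int_gsq: "integrable lebesgue (\<lambda>x. (norm (cgrad f x))\<^sup>2)"
  by (rule int_cs[OF _ K(1)]) (use gcont gzero in \<open>auto intro: continuous_intros\<close>)

end

lemma set_int_real: "set_lebesgue_integral M A (f::_ \<Rightarrow> real) = integral\<^sup>L M (\<lambda>x. indicator A x * f x)"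
  by (simp add: set_lebesgue_integral_def)

lemma set_intble_real: "set_integrable M A (f::_ \<Rightarrow> real) \<longleftrightarrow> integrable M (\<lambda>x. indicator A x * f x)"
  by (simp add: set_integrable_def)

lemma tendsto_sq_zero: "(\<lambda>n. ((a n)::real)\<^sup>2) \<longlonglongrightarrow> 0 \<Longrightarrow> a \<longlonglongrightarrow> 0"
proof -
  assume "(\<lambda>n. (a n)\<^sup>2) \<longlonglongrightarrow> 0"
  then have "(\<lambda>n. sqrt ((a n)\<^sup>2)) \<longlonglongrightarrow> sqrt 0" by (rule tendsto_real_sqrt)
  then have "(\<lambda>n. \<bar>a n\<bar>) \<longlonglongrightarrow> 0" by simp
  then show ?thesis by (simp add: tendsto_rabs_zero_iff)
qed

lemma cgrad_comp_mult:
  assumes "smooth_fun \<phi>" "smooth_fun \<psi>" "\<And>t. (F has_real_derivative F' t) (at t)"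
  shows "cgrad (\<lambda>x. F (\<phi> x) * \<psi> x) x = (F' (\<phi> x) * \<psi> x) *\<^sub>R cgrad \<phi> x + F (\<phi> x) *\<^sub>R cgrad \<psi> x"
proof (rule cgrad_eqI)
  fix b :: 'a assume b: "b \<in> Basis"
  have d1: "((\<lambda>x. F (\<phi> x)) has_derivative (\<lambda>h. frechet_derivative \<phi> (at x) h * F' (\<phi> x))) (at x)"
    by (rule DERIV_compose_FDERIV[OF assms(3)]) (use assms(1) smooth_diff frechet_derivative_works in blast)
  have d2: "(\<psi> has_derivative frechet_derivative \<psi> (at x)) (at x)"
    using assms(2) smooth_diff frechet_derivative_works by blast
  have hd: "((\<lambda>x. F (\<phi> x) * \<psi> x) has_derivative
      (\<lambda>h. F (\<phi> x) * frechet_derivative \<psi> (at x) h + frechet_derivative \<phi> (at x) h * F' (\<phi> x) * \<psi> x)) (at x)"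
    using has_derivative_mult[OF d1 d2] by simp
  then have "dderiv b (\<lambda>x. F (\<phi> x) * \<psi> x) x = F (\<phi> x) * dderiv b \<psi> x + dderiv b \<phi> x * F' (\<phi> x) * \<psi> x"
    using dderiv_at[OF hd, of b] unfolding dderiv_def by simp
  then show "((F' (\<phi> x) * \<psi> x) *\<^sub>R cgrad \<phi> x + F (\<phi> x) *\<^sub>R cgrad \<psi> x) \<bullet> b = dderiv b (\<lambda>x. F (\<phi> x) * \<psi> x) x"
    using b by (simp add: inner_add_left cgrad_inner_Basis algebra_simps)
qed

lemma sq_le_abs: "\<bar>p\<bar> \<le> q \<Longrightarrow> p\<^sup>2 \<le> (q::real)\<^sup>2"
  by (metis abs_ge_zero abs_le_square_iff abs_of_nonneg order_trans)

lemma sqdiff2: "((a::real) - b)\<^sup>2 \<le> 2 * a\<^sup>2 + 2 * b\<^sup>2"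
  using sq2[of a "-b"] by simp

lemma normdiff2: fixes a b :: "'a::real_normed_vector" shows "(norm (a - b))\<^sup>2 \<le> 2 * (norm a)\<^sup>2 + 2 * (norm b)\<^sup>2"
  using normsq2[of a "-b"] by simp

lemma H10_chain:
  fixes \<Omega> :: "'a::euclidean_space set" and u \<psi> :: "'a \<Rightarrow> real" and F F' :: "real \<Rightarrow> real" and G :: "'a \<Rightarrow> 'a"
  assumes Om: "\<Omega> \<in> sets lebesgue"
    and H: "H10 \<Omega> u G" and psi: "test_fun \<Omega> \<psi>"
    and Fs: "\<And>\<phi>::'a \<Rightarrow> real. smooth_fun \<phi> \<Longrightarrow> smooth_fun (\<lambda>x. F (\<phi> x))"
    and Fd: "\<And>t. (F has_real_derivative F' t) (at t)" and FL: "\<And>t. \<bar>F' t\<bar> \<le> L"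
    and Fc: "continuous_on UNIV F'"
  shows "H10 \<Omega> (\<lambda>x. F (u x) * \<psi> x) (\<lambda>x. (F' (u x) * \<psi> x) *\<^sub>R G x + F (u x) *\<^sub>R cgrad \<psi> x)"
proof -
  interpret psi: tf \<Omega> \<psi> by (rule tf.intro) fact
  obtain P where P: "P \<ge> 0" "\<And>x. \<bar>\<psi> x\<bar> \<le> P" using psi.bnd by blast
  obtain Q where Q: "Q \<ge> 0" "\<And>x. norm (cgrad \<psi> x) \<le> Q" using psi.gbnd by blast
  have L0: "L \<ge> 0" using FL[of 0] by linarith
  have Flip: "\<bar>F a - F b\<bar> \<le> L * \<bar>a - b\<bar>" for a b by (rule lipschitz_deriv[OF Fd FL])
  have Fcont: "continuous_on UNIV F" using Fd by (meson DERIV_isCont continuous_at_imp_continuous_on)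
  from H have um: "set_borel_measurable lebesgue \<Omega> u" and u2: "set_integrable lebesgue \<Omega> (\<lambda>x. (u x)\<^sup>2)"
    and Gm: "set_borel_measurable lebesgue \<Omega> G" and G2: "set_integrable lebesgue \<Omega> (\<lambda>x. (norm (G x))\<^sup>2)"
    and "\<exists>\<phi>. (\<forall>k. test_fun \<Omega> (\<phi> k)) \<and>
        (\<lambda>k. set_lebesgue_integral lebesgue \<Omega> (\<lambda>x. (\<phi> k x - u x)\<^sup>2 + (norm (cgrad (\<phi> k) x - G x))\<^sup>2)) \<longlonglongrightarrow> 0"
    unfolding H10_def by auto
  then obtain \<phi> where \<phi>: "\<And>k. test_fun \<Omega> (\<phi> k)"
    and conv: "(\<lambda>k. set_lebesgue_integral lebesgue \<Omega> (\<lambda>x. (\<phi> k x - u x)\<^sup>2 + (norm (cgrad (\<phi> k) x - G x))\<^sup>2)) \<longlonglongrightarrow> 0"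
    by blast
  define ut where "ut x = indicator \<Omega> x * u x" for x
  define Gt where "Gt x = indicator \<Omega> x *\<^sub>R G x" for x
  have utm: "ut \<in> borel_measurable lebesgue" using um unfolding set_borel_measurable_def ut_def by simp
  have Gtm: "Gt \<in> borel_measurable lebesgue" using Gm unfolding set_borel_measurable_def Gt_def by simp
  have ut: "\<And>x. x \<in> \<Omega> \<Longrightarrow> ut x = u x" and Gt: "\<And>x. x \<in> \<Omega> \<Longrightarrow> Gt x = G x" by (simp_all add: ut_def Gt_def)
  have u2i: "integrable lebesgue (\<lambda>x. indicator \<Omega> x * (u x)\<^sup>2)" using u2 by (simp add: set_intble_real)
  have G2i: "integrable lebesgue (\<lambda>x. indicator \<Omega> x * (norm (G x))\<^sup>2)" using G2 by (simp add: set_intble_real)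
  have \<phi>m: "\<phi> k \<in> borel_measurable lebesgue" "cgrad (\<phi> k) \<in> borel_measurable lebesgue" for k
    using tf.meas tf.gmeas tf.intro \<phi> by blast+
  have \<phi>2: "integrable lebesgue (\<lambda>x. (\<phi> k x)\<^sup>2)" "integrable lebesgue (\<lambda>x. (norm (cgrad (\<phi> k) x))\<^sup>2)" for k
    using tf.int_sq tf.int_gsq tf.intro \<phi> by blast+
  have psi2: "integrable lebesgue (\<lambda>x. (\<psi> x)\<^sup>2)" "integrable lebesgue (\<lambda>x. (norm (cgrad \<psi> x))\<^sup>2)"
    using psi.int_sq psi.int_gsq by blast+

  define S where "S k x = indicator \<Omega> x * ((\<phi> k x - u x)\<^sup>2 + (norm (cgrad (\<phi> k) x - G x))\<^sup>2)" for k x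
  have S0: "S k x \<ge> 0" for k x unfolding S_def by simp
  have Sint: "integrable lebesgue (S k)" for k
    unfolding S_def
  proof (rule int_restrict[OF Om, where g="\<lambda>x. (\<phi> k x - ut x)\<^sup>2 + (norm (cgrad (\<phi> k) x - Gt x))\<^sup>2"
        and w="\<lambda>x. 2 * (\<phi> k x)\<^sup>2 + 2 * (indicator \<Omega> x * (u x)\<^sup>2) + (2 * (norm (cgrad (\<phi> k) x))\<^sup>2 + 2 * (indicator \<Omega> x * (norm (G x))\<^sup>2))"])
    show "(\<lambda>x. (\<phi> k x - ut x)\<^sup>2 + (norm (cgrad (\<phi> k) x - Gt x))\<^sup>2) \<in> borel_measurable lebesgue"
      using \<phi>m utm Gtm by measurable
    show "integrable lebesgue (\<lambda>x. 2 * (\<phi> k x)\<^sup>2 + 2 * (indicator \<Omega> x * (u x)\<^sup>2) + (2 * (norm (cgrad (\<phi> k) x))\<^sup>2 + 2 * (indicator \<Omega> x * (norm (G x))\<^sup>2)))"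
      using \<phi>2 u2i G2i by (intro Bochner_Integration.integrable_add integrable_mult_right) auto
    fix x assume x: "x \<in> \<Omega>"
    then show "(\<phi> k x - u x)\<^sup>2 + (norm (cgrad (\<phi> k) x - G x))\<^sup>2 = (\<phi> k x - ut x)\<^sup>2 + (norm (cgrad (\<phi> k) x - Gt x))\<^sup>2"
      by (simp add: ut Gt)
    show "\<bar>(\<phi> k x - u x)\<^sup>2 + (norm (cgrad (\<phi> k) x - G x))\<^sup>2\<bar> \<le> 2 * (\<phi> k x)\<^sup>2 + 2 * (indicator \<Omega> x * (u x)\<^sup>2) + (2 * (norm (cgrad (\<phi> k) x))\<^sup>2 + 2 * (indicator \<Omega> x * (norm (G x))\<^sup>2))"
      using x sqdiff2[of "\<phi> k x" "u x"] normdiff2[of "cgrad (\<phi> k) x" "G x"] by simp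
  next
    fix x show "0 \<le> 2 * (\<phi> k x)\<^sup>2 + 2 * (indicator \<Omega> x * (u x)\<^sup>2) + (2 * (norm (cgrad (\<phi> k) x))\<^sup>2 + 2 * (indicator \<Omega> x * (norm (G x))\<^sup>2))"
      by simp
  qed
  have Sconv: "(\<lambda>k. integral\<^sup>L lebesgue (\<lambda>x. norm (S k x))) \<longlonglongrightarrow> 0"
    using conv S0 by (simp add: set_int_real S_def)
  obtain r where r: "strict_mono r" "AE x in lebesgue. (\<lambda>n. S (r n) x) \<longlonglongrightarrow> 0"
    using tendsto_L1_AE_subseq[OF Sint Sconv] by blast
  have ptw: "AE x in lebesgue. x \<in> \<Omega> \<longrightarrow> (\<lambda>n. \<phi> (r n) x) \<longlonglongrightarrow> u x"
  proof (rule AE_mp[OF r(2)], rule AE_I2, intro impI)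
    fix x assume lim: "(\<lambda>n. S (r n) x) \<longlonglongrightarrow> 0" and x: "x \<in> \<Omega>"
    have "(\<lambda>n. (\<phi> (r n) x - u x)\<^sup>2) \<longlonglongrightarrow> 0"
    proof (rule tendsto_sandwich[OF _ _ tendsto_const lim])
      show "\<forall>\<^sub>F n in sequentially. 0 \<le> (\<phi> (r n) x - u x)\<^sup>2" by simp
      show "\<forall>\<^sub>F n in sequentially. (\<phi> (r n) x - u x)\<^sup>2 \<le> S (r n) x" using x by (simp add: S_def)
    qed
    then have "(\<lambda>n. \<phi> (r n) x - u x) \<longlonglongrightarrow> 0" by (rule tendsto_sq_zero)
    then show "(\<lambda>n. \<phi> (r n) x) \<longlonglongrightarrow> u x" by (simp add: LIM_zero_iff)
  qed
  define T where "T n x = indicator \<Omega> x * ((F' (\<phi> (r n) x) - F' (u x))\<^sup>2 * (norm (G x))\<^sup>2)" for n x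
  have T0: "T n x \<ge> 0" for n x unfolding T_def by simp
  have Tm: "T n \<in> borel_measurable lebesgue" for n
  proof -
    have m1: "(\<lambda>x. F' (\<phi> (r n) x)) \<in> borel_measurable lebesgue" by (rule borel_measurable_continuous_on[OF Fc \<phi>m(1)])
    have m2: "(\<lambda>x. F' (ut x)) \<in> borel_measurable lebesgue" by (rule borel_measurable_continuous_on[OF Fc utm])
    have "(\<lambda>x. indicator \<Omega> x *\<^sub>R ((F' (\<phi> (r n) x) - F' (u x))\<^sup>2 * (norm (G x))\<^sup>2)) \<in> borel_measurable lebesgue"
      by (rule meas_restrict[OF Om, where g="\<lambda>x. (F' (\<phi> (r n) x) - F' (ut x))\<^sup>2 * (norm (Gt x))\<^sup>2"])
         (use m1 m2 Gtm in \<open>measurable\<close>, simp add: ut Gt)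
    then show ?thesis unfolding T_def[abs_def] by simp
  qed
  have wT: "integrable lebesgue (\<lambda>x. 4 * L\<^sup>2 * (indicator \<Omega> x * (norm (G x))\<^sup>2))"
    using G2i by (intro integrable_mult_right)
  have Tlimx: "AE x in lebesgue. (\<lambda>n. T n x) \<longlonglongrightarrow> 0"
  proof (rule AE_mp[OF ptw], rule AE_I2, intro impI)
    fix x assume h: "x \<in> \<Omega> \<longrightarrow> (\<lambda>n. \<phi> (r n) x) \<longlonglongrightarrow> u x"
    show "(\<lambda>n. T n x) \<longlonglongrightarrow> 0"
    proof (cases "x \<in> \<Omega>")
      case True
      then have "(\<lambda>n. \<phi> (r n) x) \<longlonglongrightarrow> u x" using h by blast
      moreover have "isCont F' (u x)" using Fc by (simp add: continuous_on_eq_continuous_at)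
      ultimately have "(\<lambda>n. F' (\<phi> (r n) x)) \<longlonglongrightarrow> F' (u x)" by (rule isCont_tendsto_compose[rotated])
      then have "(\<lambda>n. indicator \<Omega> x * ((F' (\<phi> (r n) x) - F' (u x))\<^sup>2 * (norm (G x))\<^sup>2)) \<longlonglongrightarrow>
          indicator \<Omega> x * ((F' (u x) - F' (u x))\<^sup>2 * (norm (G x))\<^sup>2)"
        by (intro tendsto_intros)
      then show ?thesis by (simp add: T_def)
    qed (simp add: T_def)
  qed
  have Tbnd: "AE x in lebesgue. norm (T n x) \<le> 4 * L\<^sup>2 * (indicator \<Omega> x * (norm (G x))\<^sup>2)" for n
  proof (rule AE_I2)
    fix x
    have "\<bar>F' (\<phi> (r n) x) - F' (u x)\<bar> \<le> 2 * L" using FL[of "\<phi> (r n) x"] FL[of "u x"] by linarith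
    then have "(F' (\<phi> (r n) x) - F' (u x))\<^sup>2 \<le> (2 * L)\<^sup>2"
      by (metis abs_le_square_iff abs_of_nonneg L0 mult_nonneg_nonneg zero_le_numeral)
    then have "(F' (\<phi> (r n) x) - F' (u x))\<^sup>2 * (norm (G x))\<^sup>2 \<le> (2 * L)\<^sup>2 * (norm (G x))\<^sup>2"
      by (rule mult_right_mono) simp
    then show "norm (T n x) \<le> 4 * L\<^sup>2 * (indicator \<Omega> x * (norm (G x))\<^sup>2)"
      by (auto simp: T_def indicator_def power_mult_distrib)
  qed
  have Tint: "integrable lebesgue (T n)" for n
    by (rule integrable_dominated_convergence2[OF _ Tm wT Tlimx Tbnd]) simp
  have Tlim: "(\<lambda>n. integral\<^sup>L lebesgue (T n)) \<longlonglongrightarrow> 0"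
    using integral_dominated_convergence[OF _ Tm wT Tlimx Tbnd] by simp
  define ch where "ch n x = F (\<phi> (r n) x) * \<psi> x" for n x
  define v where "v x = F (u x) * \<psi> x" for x
  define Gv where "Gv x = (F' (u x) * \<psi> x) *\<^sub>R G x + F (u x) *\<^sub>R cgrad \<psi> x" for x
  have cht: "test_fun \<Omega> (ch n)" for n
  proof -
    have "smooth_fun (\<phi> (r n))" by (rule tf.smooth, rule tf.intro, rule \<phi>)
    then have "smooth_fun (\<lambda>x. F (\<phi> (r n) x))" by (rule Fs)
    from test_fun_mult[OF psi this] show ?thesis unfolding ch_def[abs_def] .
  qed
  have chg: "cgrad (ch n) x = (F' (\<phi> (r n) x) * \<psi> x) *\<^sub>R cgrad (\<phi> (r n)) x + F (\<phi> (r n) x) *\<^sub>R cgrad \<psi> x" for n x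
  proof -
    have "smooth_fun (\<phi> (r n))" by (rule tf.smooth, rule tf.intro, rule \<phi>)
    from cgrad_comp_mult[OF this psi.smooth Fd] show ?thesis unfolding ch_def[abs_def] .
  qed
  define E where "E n x = indicator \<Omega> x * ((ch n x - v x)\<^sup>2 + (norm (cgrad (ch n) x - Gv x))\<^sup>2)" for n x
  define C1 where "C1 = 4 * L\<^sup>2 * P\<^sup>2 + 3 * L\<^sup>2 * Q\<^sup>2"
  define C2 where "C2 = 3 * P\<^sup>2"
  have Ebound: "E n x \<le> C1 * S (r n) x + C2 * T n x" for n x
  proof (cases "x \<in> \<Omega>")
    case False then show ?thesis by (simp add: E_def S_def T_def)
  next
    case True
    define a where "a = \<phi> (r n) x"
    define b where "b = u x"
    define A where "A = (a - b)\<^sup>2"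
    define B where "B = (norm (cgrad (\<phi> (r n)) x - G x))\<^sup>2"
    define D where "D = (F' a - F' b)\<^sup>2"
    define N where "N = (norm (G x))\<^sup>2"
    have A0: "A \<ge> 0" and B0: "B \<ge> 0" and D0: "D \<ge> 0" and N0: "N \<ge> 0" by (simp_all add: A_def B_def D_def N_def)
    have sq_le: "\<bar>p\<bar> \<le> q \<Longrightarrow> p\<^sup>2 \<le> q\<^sup>2" for p q :: real
      by (metis abs_ge_zero abs_le_square_iff abs_of_nonneg order_trans)
    have h1: "(F a - F b)\<^sup>2 \<le> L\<^sup>2 * A"
      using sq_le[OF Flip[of a b]] by (simp add: A_def power_mult_distrib)
    have hp: "(\<psi> x)\<^sup>2 \<le> P\<^sup>2" by (rule sq_le[OF P(2)])
    have hq: "(norm (cgrad \<psi> x))\<^sup>2 \<le> Q\<^sup>2" by (rule sq_le) (use Q(2) in simp)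
    have hF: "(F' a)\<^sup>2 \<le> L\<^sup>2" by (rule sq_le[OF FL])
    have e1: "(ch n x - v x)\<^sup>2 = (F a - F b)\<^sup>2 * (\<psi> x)\<^sup>2"
      by (simp add: ch_def v_def a_def b_def power_mult_distrib[symmetric] algebra_simps)
    have e2: "cgrad (ch n) x - Gv x = (F' a * \<psi> x) *\<^sub>R (cgrad (\<phi> (r n)) x - G x) +
        ((F' a - F' b) * \<psi> x) *\<^sub>R G x + (F a - F b) *\<^sub>R cgrad \<psi> x"
      unfolding chg Gv_def a_def b_def by (simp add: algebra_simps scaleR_diff_right scaleR_diff_left)
    have n1: "(norm (cgrad (ch n) x - Gv x))\<^sup>2 \<le> 3 * ((F' a)\<^sup>2 * (\<psi> x)\<^sup>2 * B + D * (\<psi> x)\<^sup>2 * N + (F a - F b)\<^sup>2 * (norm (cgrad \<psi> x))\<^sup>2)"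
      unfolding e2 using norm3[of "(F' a * \<psi> x) *\<^sub>R (cgrad (\<phi> (r n)) x - G x)" "((F' a - F' b) * \<psi> x) *\<^sub>R G x" "(F a - F b) *\<^sub>R cgrad \<psi> x"]
      by (simp add: B_def D_def N_def power_mult_distrib)
    have X1: "(F a - F b)\<^sup>2 * (\<psi> x)\<^sup>2 \<le> (L\<^sup>2 * A) * P\<^sup>2"
      by (rule mult_mono[OF h1 hp]) (use A0 in auto)
    have X2: "(F' a)\<^sup>2 * (\<psi> x)\<^sup>2 * B \<le> (L\<^sup>2 * P\<^sup>2) * B"
      by (rule mult_right_mono[OF mult_mono[OF hF hp]]) (use B0 in auto)
    have X3: "D * (\<psi> x)\<^sup>2 * N \<le> D * P\<^sup>2 * N"
      by (intro mult_right_mono mult_left_mono hp) (use D0 N0 in auto)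
    have X4: "(F a - F b)\<^sup>2 * (norm (cgrad \<psi> x))\<^sup>2 \<le> (L\<^sup>2 * A) * Q\<^sup>2"
      by (rule mult_mono[OF h1 hq]) (use A0 in auto)
    have Y1: "(L\<^sup>2 * A) * P\<^sup>2 + 3 * ((L\<^sup>2 * A) * Q\<^sup>2) \<le> C1 * A"
    proof -
      have "0 \<le> 3 * L\<^sup>2 * P\<^sup>2 * A" using A0 by simp
      then show ?thesis unfolding C1_def by (simp add: algebra_simps)
    qed
    have Y2: "3 * ((L\<^sup>2 * P\<^sup>2) * B) \<le> C1 * B"
    proof -
      have "0 \<le> (L\<^sup>2 * P\<^sup>2 + 3 * L\<^sup>2 * Q\<^sup>2) * B" using B0 by simp
      then show ?thesis unfolding C1_def by (simp add: algebra_simps)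
    qed
    have Y3: "3 * (D * P\<^sup>2 * N) = C2 * (D * N)" unfolding C2_def by simp
    have "E n x = (ch n x - v x)\<^sup>2 + (norm (cgrad (ch n) x - Gv x))\<^sup>2" using True by (simp add: E_def)
    also have "\<dots> \<le> C1 * A + C1 * B + C2 * (D * N)"
    proof -
      have Z: "(norm (cgrad (ch n) x - Gv x))\<^sup>2 \<le> 3 * ((L\<^sup>2 * P\<^sup>2) * B) + 3 * (D * P\<^sup>2 * N) + 3 * ((L\<^sup>2 * A) * Q\<^sup>2)"
        using n1 X2 X3 X4 by (smt (verit))
      show ?thesis using e1 Z X1 Y1 Y2 Y3 by (smt (verit))
    qed
    also have "\<dots> = C1 * S (r n) x + C2 * T n x"
      using True by (simp add: S_def T_def A_def B_def D_def N_def a_def b_def algebra_simps)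
    finally show ?thesis .
  qed
  have E0: "E n x \<ge> 0" for n x unfolding E_def by simp
  have cht': "tf \<Omega> (ch n)" for n by (rule tf.intro, rule cht)
  have Fum: "(\<lambda>x. F (ut x)) \<in> borel_measurable lebesgue" by (rule borel_measurable_continuous_on[OF Fcont utm])
  have F'um: "(\<lambda>x. F' (ut x)) \<in> borel_measurable lebesgue" by (rule borel_measurable_continuous_on[OF Fc utm])
  have Eint: "integrable lebesgue (E n)" for n
    unfolding E_def
  proof (rule int_restrict[OF Om, where g="\<lambda>x. (ch n x - F (ut x) * \<psi> x)\<^sup>2 + (norm (cgrad (ch n) x - ((F' (ut x) * \<psi> x) *\<^sub>R Gt x + F (ut x) *\<^sub>R cgrad \<psi> x)))\<^sup>2"
        and w="\<lambda>x. C1 * S (r n) x + C2 * T n x"])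
    show "(\<lambda>x. (ch n x - F (ut x) * \<psi> x)\<^sup>2 + (norm (cgrad (ch n) x - ((F' (ut x) * \<psi> x) *\<^sub>R Gt x + F (ut x) *\<^sub>R cgrad \<psi> x)))\<^sup>2) \<in> borel_measurable lebesgue"
      using tf.meas[OF cht'] tf.gmeas[OF cht'] Fum F'um psi.meas psi.gmeas Gtm by measurable
    show "integrable lebesgue (\<lambda>x. C1 * S (r n) x + C2 * T n x)"
      using Sint Tint by (intro Bochner_Integration.integrable_add integrable_mult_right)
    fix x assume x: "x \<in> \<Omega>"
    then show "(ch n x - v x)\<^sup>2 + (norm (cgrad (ch n) x - Gv x))\<^sup>2 = (ch n x - F (ut x) * \<psi> x)\<^sup>2 + (norm (cgrad (ch n) x - ((F' (ut x) * \<psi> x) *\<^sub>R Gt x + F (ut x) *\<^sub>R cgrad \<psi> x)))\<^sup>2"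
      by (simp add: ut Gt v_def Gv_def)
    show "\<bar>(ch n x - v x)\<^sup>2 + (norm (cgrad (ch n) x - Gv x))\<^sup>2\<bar> \<le> C1 * S (r n) x + C2 * T n x"
      using Ebound[of n x] x by (simp add: E_def)
  next
    fix x show "0 \<le> C1 * S (r n) x + C2 * T n x"
      using S0 T0 unfolding C1_def C2_def by (intro add_nonneg_nonneg mult_nonneg_nonneg) auto
  qed
  have Elim: "(\<lambda>n. integral\<^sup>L lebesgue (E n)) \<longlonglongrightarrow> 0"
  proof (rule tendsto_sandwich[where f="\<lambda>n. 0" and h="\<lambda>n. C1 * integral\<^sup>L lebesgue (S (r n)) + C2 * integral\<^sup>L lebesgue (T n)"])
    show "\<forall>\<^sub>F n in sequentially. 0 \<le> integral\<^sup>L lebesgue (E n)"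
      using E0 by (intro always_eventually allI integral_nonneg_AE AE_I2) auto
    show "\<forall>\<^sub>F n in sequentially. integral\<^sup>L lebesgue (E n) \<le> C1 * integral\<^sup>L lebesgue (S (r n)) + C2 * integral\<^sup>L lebesgue (T n)"
    proof (intro always_eventually allI)
      fix n
      have "integral\<^sup>L lebesgue (E n) \<le> integral\<^sup>L lebesgue (\<lambda>x. C1 * S (r n) x + C2 * T n x)"
        by (rule integral_mono[OF Eint]) (use Sint Tint Ebound in auto)
      also have "\<dots> = C1 * integral\<^sup>L lebesgue (S (r n)) + C2 * integral\<^sup>L lebesgue (T n)"
        using Sint Tint by simp
      finally show "integral\<^sup>L lebesgue (E n) \<le> C1 * integral\<^sup>L lebesgue (S (r n)) + C2 * integral\<^sup>L lebesgue (T n)" .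
    qed
    have "(\<lambda>n. integral\<^sup>L lebesgue (S (r n))) \<longlonglongrightarrow> 0"
      using LIMSEQ_subseq_LIMSEQ[OF Sconv r(1)] S0 by (simp add: o_def)
    then show "(\<lambda>n. C1 * integral\<^sup>L lebesgue (S (r n)) + C2 * integral\<^sup>L lebesgue (T n)) \<longlonglongrightarrow> 0"
      using Tlim by (auto intro!: tendsto_eq_intros)
  qed simp
  have hFu: "(F t)\<^sup>2 \<le> 2 * L\<^sup>2 * t\<^sup>2 + 2 * (F 0)\<^sup>2" for t
  proof -
    have "\<bar>F t - F 0\<bar> \<le> L * \<bar>t\<bar>" using Flip[of t 0] by simp
    then have "(F t - F 0)\<^sup>2 \<le> (L * \<bar>t\<bar>)\<^sup>2"
      by (metis abs_ge_zero abs_le_square_iff abs_of_nonneg order_trans)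
    moreover have "(F t)\<^sup>2 \<le> 2 * (F t - F 0)\<^sup>2 + 2 * (F 0)\<^sup>2" using sq2[of "F t - F 0" "F 0"] by simp
    ultimately show ?thesis by (simp add: power_mult_distrib)
  qed
  have vm: "set_borel_measurable lebesgue \<Omega> v"
    unfolding set_borel_measurable_def
    by (rule meas_restrict[OF Om, where g="\<lambda>x. F (ut x) * \<psi> x"]) (use Fum psi.meas in \<open>measurable\<close>, simp add: v_def ut)
  have v2: "set_integrable lebesgue \<Omega> (\<lambda>x. (v x)\<^sup>2)"
    unfolding set_intble_real
  proof (rule int_restrict[OF Om, where g="\<lambda>x. (F (ut x) * \<psi> x)\<^sup>2" and w="\<lambda>x. 2 * L\<^sup>2 * P\<^sup>2 * (indicator \<Omega> x * (u x)\<^sup>2) + 2 * (F 0)\<^sup>2 * (\<psi> x)\<^sup>2"])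
    show "(\<lambda>x. (F (ut x) * \<psi> x)\<^sup>2) \<in> borel_measurable lebesgue" using Fum psi.meas by measurable
    show "integrable lebesgue (\<lambda>x. 2 * L\<^sup>2 * P\<^sup>2 * (indicator \<Omega> x * (u x)\<^sup>2) + 2 * (F 0)\<^sup>2 * (\<psi> x)\<^sup>2)"
      using u2i psi2 by (intro Bochner_Integration.integrable_add integrable_mult_right)
    fix x assume x: "x \<in> \<Omega>"
    then show "(v x)\<^sup>2 = (F (ut x) * \<psi> x)\<^sup>2" by (simp add: v_def ut)
    have "(F (u x))\<^sup>2 * (\<psi> x)\<^sup>2 \<le> (2 * L\<^sup>2 * (u x)\<^sup>2 + 2 * (F 0)\<^sup>2) * (\<psi> x)\<^sup>2"
      by (rule mult_right_mono[OF hFu]) simp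
    also have "\<dots> \<le> 2 * L\<^sup>2 * P\<^sup>2 * (u x)\<^sup>2 + 2 * (F 0)\<^sup>2 * (\<psi> x)\<^sup>2"
    proof -
      have "L\<^sup>2 * (u x)\<^sup>2 * (\<psi> x)\<^sup>2 \<le> L\<^sup>2 * (u x)\<^sup>2 * P\<^sup>2"
        by (rule mult_left_mono) (use sq_le_abs[OF P(2)] in auto)
      then show ?thesis by (simp add: algebra_simps)
    qed
    finally show "\<bar>(v x)\<^sup>2\<bar> \<le> 2 * L\<^sup>2 * P\<^sup>2 * (indicator \<Omega> x * (u x)\<^sup>2) + 2 * (F 0)\<^sup>2 * (\<psi> x)\<^sup>2"
      using x by (simp add: v_def power_mult_distrib)
  qed simp
  have Gvm: "set_borel_measurable lebesgue \<Omega> Gv"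
    unfolding set_borel_measurable_def
    by (rule meas_restrict[OF Om, where g="\<lambda>x. (F' (ut x) * \<psi> x) *\<^sub>R Gt x + F (ut x) *\<^sub>R cgrad \<psi> x"])
       (use Fum F'um psi.meas psi.gmeas Gtm in \<open>measurable\<close>, simp add: Gv_def ut Gt)
  have Gv2: "set_integrable lebesgue \<Omega> (\<lambda>x. (norm (Gv x))\<^sup>2)"
    unfolding set_intble_real
  proof (rule int_restrict[OF Om, where g="\<lambda>x. (norm ((F' (ut x) * \<psi> x) *\<^sub>R Gt x + F (ut x) *\<^sub>R cgrad \<psi> x))\<^sup>2"
      and w="\<lambda>x. 2 * L\<^sup>2 * P\<^sup>2 * (indicator \<Omega> x * (norm (G x))\<^sup>2) + 4 * L\<^sup>2 * Q\<^sup>2 * (indicator \<Omega> x * (u x)\<^sup>2) + 4 * (F 0)\<^sup>2 * (norm (cgrad \<psi> x))\<^sup>2"])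
    show "(\<lambda>x. (norm ((F' (ut x) * \<psi> x) *\<^sub>R Gt x + F (ut x) *\<^sub>R cgrad \<psi> x))\<^sup>2) \<in> borel_measurable lebesgue"
      using Fum F'um psi.meas psi.gmeas Gtm by measurable
    show "integrable lebesgue (\<lambda>x. 2 * L\<^sup>2 * P\<^sup>2 * (indicator \<Omega> x * (norm (G x))\<^sup>2) + 4 * L\<^sup>2 * Q\<^sup>2 * (indicator \<Omega> x * (u x)\<^sup>2) + 4 * (F 0)\<^sup>2 * (norm (cgrad \<psi> x))\<^sup>2)"
      using u2i G2i psi2 by (intro Bochner_Integration.integrable_add integrable_mult_right)
    fix x assume x: "x \<in> \<Omega>"
    then show "(norm (Gv x))\<^sup>2 = (norm ((F' (ut x) * \<psi> x) *\<^sub>R Gt x + F (ut x) *\<^sub>R cgrad \<psi> x))\<^sup>2" by (simp add: Gv_def ut Gt)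
    have sq_le: "\<bar>p\<bar> \<le> q \<Longrightarrow> p\<^sup>2 \<le> q\<^sup>2" for p q :: real
      by (metis abs_ge_zero abs_le_square_iff abs_of_nonneg order_trans)
    have a1: "(F' (u x) * \<psi> x)\<^sup>2 \<le> L\<^sup>2 * P\<^sup>2"
      unfolding power_mult_distrib by (rule mult_mono) (use sq_le[OF FL] sq_le[OF P(2)] in auto)
    have a2: "(F (u x))\<^sup>2 * (norm (cgrad \<psi> x))\<^sup>2 \<le> (2 * L\<^sup>2 * (u x)\<^sup>2 + 2 * (F 0)\<^sup>2) * (norm (cgrad \<psi> x))\<^sup>2"
      by (rule mult_right_mono[OF hFu]) simp
    have a3: "L\<^sup>2 * (u x)\<^sup>2 * (norm (cgrad \<psi> x))\<^sup>2 \<le> L\<^sup>2 * (u x)\<^sup>2 * Q\<^sup>2"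
      by (rule mult_left_mono) (use sq_le[of "norm (cgrad \<psi> x)" Q] Q in auto)
    have a4: "(F' (u x) * \<psi> x)\<^sup>2 * (norm (G x))\<^sup>2 \<le> L\<^sup>2 * P\<^sup>2 * (norm (G x))\<^sup>2"
      by (rule mult_right_mono[OF a1]) simp
    have "(norm (Gv x))\<^sup>2 \<le> 2 * ((norm ((F' (u x) * \<psi> x) *\<^sub>R G x))\<^sup>2 + (norm (F (u x) *\<^sub>R cgrad \<psi> x))\<^sup>2)"
      unfolding Gv_def by (rule normsq2)
    also have "\<dots> = 2 * ((F' (u x) * \<psi> x)\<^sup>2 * (norm (G x))\<^sup>2 + (F (u x))\<^sup>2 * (norm (cgrad \<psi> x))\<^sup>2)"
      by (simp add: power_mult_distrib)
    also have "\<dots> \<le> 2 * L\<^sup>2 * P\<^sup>2 * (norm (G x))\<^sup>2 + 4 * L\<^sup>2 * Q\<^sup>2 * (u x)\<^sup>2 + 4 * (F 0)\<^sup>2 * (norm (cgrad \<psi> x))\<^sup>2"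
      using a2 a3 a4 by (simp add: algebra_simps)
    finally show "\<bar>(norm (Gv x))\<^sup>2\<bar> \<le> 2 * L\<^sup>2 * P\<^sup>2 * (indicator \<Omega> x * (norm (G x))\<^sup>2) + 4 * L\<^sup>2 * Q\<^sup>2 * (indicator \<Omega> x * (u x)\<^sup>2) + 4 * (F 0)\<^sup>2 * (norm (cgrad \<psi> x))\<^sup>2"
      using x by simp
  qed simp
  have "(\<lambda>n. set_lebesgue_integral lebesgue \<Omega> (\<lambda>x. (ch n x - v x)\<^sup>2 + (norm (cgrad (ch n) x - Gv x))\<^sup>2)) \<longlonglongrightarrow> 0"
    using Elim by (simp add: set_int_real E_def[abs_def])
  then show ?thesis unfolding H10_def v_def[symmetric] Gv_def[symmetric]
    using vm v2 Gvm Gv2 cht by blast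
qed

lemma abs_le_1_sq: "\<bar>t::real\<bar> \<le> 1 + t\<^sup>2"
proof -
  have "0 \<le> (\<bar>t\<bar> - 1/2)\<^sup>2" by simp
  then have "0 \<le> \<bar>t\<bar> * \<bar>t\<bar> - \<bar>t\<bar> + 1/4" by (simp add: power2_eq_square algebra_simps)
  moreover have "\<bar>t\<bar> * \<bar>t\<bar> = t\<^sup>2" by (simp add: power2_eq_square abs_mult_self_eq)
  ultimately show ?thesis by linarith
qed

lemma abs_le_eps: assumes "(e::real) > 0" shows "\<bar>t\<bar> \<le> e + t\<^sup>2 / e"
proof -
  have "0 \<le> (\<bar>t\<bar> - e)\<^sup>2" by simp
  then have "0 \<le> \<bar>t\<bar> * \<bar>t\<bar> - 2 * e * \<bar>t\<bar> + e * e" by (simp add: power2_eq_square algebra_simps)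
  moreover have "\<bar>t\<bar> * \<bar>t\<bar> = t\<^sup>2" by (simp add: power2_eq_square abs_mult_self_eq)
  ultimately have "2 * e * \<bar>t\<bar> \<le> t\<^sup>2 + e * e" by linarith
  moreover have "0 \<le> e * \<bar>t\<bar>" using assms by simp
  ultimately have "\<bar>t\<bar> * e \<le> t\<^sup>2 + e * e" by (simp add: algebra_simps)
  then have "\<bar>t\<bar> \<le> (t\<^sup>2 + e * e) / e" by (simp add: pos_le_divide_eq[OF assms])
  also have "\<dots> = e + t\<^sup>2 / e" using assms by (simp add: add_divide_distrib)
  finally show ?thesis .
qed

lemma L2_L1:
  fixes w :: "'a \<Rightarrow> real" and f :: "nat \<Rightarrow> 'a \<Rightarrow> real"
  assumes wi: "integrable M w" and w0: "\<And>x. w x \<ge> 0"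
    and i2: "\<And>k. integrable M (\<lambda>x. w x * (f k x)\<^sup>2)" and i1: "\<And>k. integrable M (\<lambda>x. w x * \<bar>f k x\<bar>)"
    and lim: "(\<lambda>k. integral\<^sup>L M (\<lambda>x. w x * (f k x)\<^sup>2)) \<longlonglongrightarrow> 0"
  shows "(\<lambda>k. integral\<^sup>L M (\<lambda>x. w x * \<bar>f k x\<bar>)) \<longlonglongrightarrow> 0"
proof (rule LIMSEQ_I)
  fix r :: real assume r: "r > 0"
  define W where "W = integral\<^sup>L M w"
  have W0: "W \<ge> 0" unfolding W_def using w0 by (intro integral_nonneg_AE AE_I2) auto
  define e where "e = r / (2 * (W + 1))"
  have e: "e > 0" using r W0 by (simp add: e_def)
  have eW1: "e * (W + 1) = r / 2"
  proof -
    have "W + 1 \<noteq> 0" "2 * W + 2 \<noteq> 0" using W0 by linarith+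
    then show ?thesis unfolding e_def by (simp add: field_simps)
  qed
  have eW: "e * W < r / 2" using eW1 e by (simp add: algebra_simps)
  obtain no where no: "\<And>n. n \<ge> no \<Longrightarrow> norm (integral\<^sup>L M (\<lambda>x. w x * (f n x)\<^sup>2) - 0) < e * (r / 2)"
    using LIMSEQ_D[OF lim, of "e * (r/2)"] e r by auto
  show "\<exists>no. \<forall>n\<ge>no. norm (integral\<^sup>L M (\<lambda>x. w x * \<bar>f n x\<bar>) - 0) < r"
  proof (intro exI allI impI)
    fix n assume n: "n \<ge> no"
    have pt: "w x * \<bar>f n x\<bar> \<le> e * w x + (w x * (f n x)\<^sup>2) / e" for x
    proof -
      have "\<bar>f n x\<bar> \<le> e + (f n x)\<^sup>2 / e" by (rule abs_le_eps[OF e])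
      then have "w x * \<bar>f n x\<bar> \<le> w x * (e + (f n x)\<^sup>2 / e)" by (rule mult_left_mono) (rule w0)
      then show ?thesis by (simp add: algebra_simps)
    qed
    have int3: "integrable M (\<lambda>x. e * w x + (w x * (f n x)\<^sup>2) / e)"
      by (intro Bochner_Integration.integrable_add integrable_mult_right integrable_divide wi i2)
    have "integral\<^sup>L M (\<lambda>x. w x * \<bar>f n x\<bar>) \<le> integral\<^sup>L M (\<lambda>x. e * w x + (w x * (f n x)\<^sup>2) / e)"
      by (rule integral_mono[OF i1 int3 pt])
    also have "\<dots> = integral\<^sup>L M (\<lambda>x. e * w x) + integral\<^sup>L M (\<lambda>x. (w x * (f n x)\<^sup>2) / e)"
      by (rule Bochner_Integration.integral_add) (intro integrable_mult_right integrable_divide wi i2)+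
    also have "\<dots> = e * W + integral\<^sup>L M (\<lambda>x. w x * (f n x)\<^sup>2) / e"
      unfolding W_def by (simp only: integral_mult_right_zero integral_divide_zero)
    also have "\<dots> < r / 2 + r / 2"
    proof -
      have "integral\<^sup>L M (\<lambda>x. w x * (f n x)\<^sup>2) < e * (r / 2)" using no[OF n] by simp
      then have "integral\<^sup>L M (\<lambda>x. w x * (f n x)\<^sup>2) / e < r / 2" using e by (simp add: pos_divide_less_eq mult.commute)
      then show ?thesis using eW by linarith
    qed
    finally have "integral\<^sup>L M (\<lambda>x. w x * \<bar>f n x\<bar>) < r" by simp
    moreover have "integral\<^sup>L M (\<lambda>x. w x * \<bar>f n x\<bar>) \<ge> 0" using w0 by (intro integral_nonneg_AE AE_I2) auto
    ultimately show "norm (integral\<^sup>L M (\<lambda>x. w x * \<bar>f n x\<bar>) - 0) < r" by simp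
  qed
qed

lemma int_deriv_test:
  assumes "test_fun \<Omega> f" "b \<in> Basis" "\<Omega> \<in> sets lebesgue"
  shows "integral\<^sup>L lebesgue (\<lambda>x. indicator \<Omega> x * (cgrad f x \<bullet> b)) = 0"
proof -
  interpret tf \<Omega> f by (rule tf.intro) fact
  have "(\<lambda>x. indicator \<Omega> x * (cgrad f x \<bullet> b)) = dderiv b f"
  proof
    fix x show "indicator \<Omega> x * (cgrad f x \<bullet> b) = dderiv b f x"
      using K(2) dzero[of x b] by (cases "x \<in> \<Omega>") (auto simp: cgrad_inner_Basis assms(2))
  qed
  moreover have "dderiv b f \<in> borel_measurable lborel"
    using dderiv_cont[OF smooth assms(2)] borel_measurable_continuous_onI by simp
  moreover have "integral\<^sup>L lborel (dderiv b f) = 0"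
    by (rule ibp[OF diff dderiv_cont[OF smooth assms(2)] K(1) K(3) assms(2)])
  ultimately show ?thesis by (simp add: integral_completion)
qed

lemma H10_zero_mean:
  fixes \<Omega> :: "'a::euclidean_space set"
  assumes Om: "\<Omega> \<in> sets lebesgue" "emeasure lebesgue \<Omega> < \<infinity>"
    and H: "H10 \<Omega> w Gw" and b: "b \<in> Basis"
  shows "set_integrable lebesgue \<Omega> (\<lambda>x. Gw x \<bullet> b)"
    and "set_lebesgue_integral lebesgue \<Omega> (\<lambda>x. Gw x \<bullet> b) = 0"
proof -
  from H have wm: "set_borel_measurable lebesgue \<Omega> w" and w2: "set_integrable lebesgue \<Omega> (\<lambda>x. (w x)\<^sup>2)"
    and Gm: "set_borel_measurable lebesgue \<Omega> Gw" and G2: "set_integrable lebesgue \<Omega> (\<lambda>x. (norm (Gw x))\<^sup>2)"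
    and "\<exists>\<phi>. (\<forall>k. test_fun \<Omega> (\<phi> k)) \<and>
        (\<lambda>k. set_lebesgue_integral lebesgue \<Omega> (\<lambda>x. (\<phi> k x - w x)\<^sup>2 + (norm (cgrad (\<phi> k) x - Gw x))\<^sup>2)) \<longlonglongrightarrow> 0"
    unfolding H10_def by auto
  then obtain \<phi> where \<phi>: "\<And>k. test_fun \<Omega> (\<phi> k)"
    and conv: "(\<lambda>k. set_lebesgue_integral lebesgue \<Omega> (\<lambda>x. (\<phi> k x - w x)\<^sup>2 + (norm (cgrad (\<phi> k) x - Gw x))\<^sup>2)) \<longlonglongrightarrow> 0"
    by blast
  define wt where "wt x = indicator \<Omega> x * w x" for x
  define Gt where "Gt x = indicator \<Omega> x *\<^sub>R Gw x" for x
  have wtm: "wt \<in> borel_measurable lebesgue" using wm unfolding set_borel_measurable_def wt_def by simp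
  have Gtm: "Gt \<in> borel_measurable lebesgue" using Gm unfolding set_borel_measurable_def Gt_def by simp
  have wt: "\<And>x. x \<in> \<Omega> \<Longrightarrow> wt x = w x" and Gt: "\<And>x. x \<in> \<Omega> \<Longrightarrow> Gt x = Gw x" by (simp_all add: wt_def Gt_def)
  have w2i: "integrable lebesgue (\<lambda>x. indicator \<Omega> x * (w x)\<^sup>2)" using w2 by (simp add: set_intble_real)
  have G2i: "integrable lebesgue (\<lambda>x. indicator \<Omega> x * (norm (Gw x))\<^sup>2)" using G2 by (simp add: set_intble_real)
  have Oi: "integrable lebesgue (indicator \<Omega> :: 'a \<Rightarrow> real)" using Om by (intro integrable_real_indicator) auto
  have \<phi>m: "\<phi> k \<in> borel_measurable lebesgue" "cgrad (\<phi> k) \<in> borel_measurable lebesgue" for k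
    using tf.meas tf.gmeas tf.intro \<phi> by blast+
  have \<phi>2: "integrable lebesgue (\<lambda>x. (\<phi> k x)\<^sup>2)" "integrable lebesgue (\<lambda>x. (norm (cgrad (\<phi> k) x))\<^sup>2)" for k
    using tf.int_sq tf.int_gsq tf.intro \<phi> by blast+
  have Gbi: "integrable lebesgue (\<lambda>x. indicator \<Omega> x * (Gw x \<bullet> b))"
  proof (rule int_restrict[OF Om(1), where g="\<lambda>x. Gt x \<bullet> b" and w="\<lambda>x. indicator \<Omega> x + indicator \<Omega> x * (norm (Gw x))\<^sup>2"])
    show "(\<lambda>x. Gt x \<bullet> b) \<in> borel_measurable lebesgue" using Gtm by measurable
    show "integrable lebesgue (\<lambda>x. indicator \<Omega> x + indicator \<Omega> x * (norm (Gw x))\<^sup>2)"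
      using Oi G2i by (rule Bochner_Integration.integrable_add)
    fix x assume x: "x \<in> \<Omega>"
    then show "Gw x \<bullet> b = Gt x \<bullet> b" by (simp add: Gt)
    have "\<bar>Gw x \<bullet> b\<bar> \<le> norm (Gw x)" using b by (metis Basis_le_norm)
    also have "\<dots> \<le> 1 + (norm (Gw x))\<^sup>2" using abs_le_1_sq[of "norm (Gw x)"] by simp
    finally show "\<bar>Gw x \<bullet> b\<bar> \<le> indicator \<Omega> x + indicator \<Omega> x * (norm (Gw x))\<^sup>2" using x by simp
  qed simp
  then show "set_integrable lebesgue \<Omega> (\<lambda>x. Gw x \<bullet> b)" by (simp add: set_intble_real)
  define f where "f k x = (cgrad (\<phi> k) x - Gw x) \<bullet> b" for k x
  define S where "S k x = indicator \<Omega> x * ((\<phi> k x - w x)\<^sup>2 + (norm (cgrad (\<phi> k) x - Gw x))\<^sup>2)" for k x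
  have Sint: "integrable lebesgue (S k)" for k
    unfolding S_def
  proof (rule int_restrict[OF Om(1), where g="\<lambda>x. (\<phi> k x - wt x)\<^sup>2 + (norm (cgrad (\<phi> k) x - Gt x))\<^sup>2"
        and w="\<lambda>x. 2 * (\<phi> k x)\<^sup>2 + 2 * (indicator \<Omega> x * (w x)\<^sup>2) + (2 * (norm (cgrad (\<phi> k) x))\<^sup>2 + 2 * (indicator \<Omega> x * (norm (Gw x))\<^sup>2))"])
    show "(\<lambda>x. (\<phi> k x - wt x)\<^sup>2 + (norm (cgrad (\<phi> k) x - Gt x))\<^sup>2) \<in> borel_measurable lebesgue"
      using \<phi>m wtm Gtm by measurable
    show "integrable lebesgue (\<lambda>x. 2 * (\<phi> k x)\<^sup>2 + 2 * (indicator \<Omega> x * (w x)\<^sup>2) + (2 * (norm (cgrad (\<phi> k) x))\<^sup>2 + 2 * (indicator \<Omega> x * (norm (Gw x))\<^sup>2)))"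
      using \<phi>2 w2i G2i by (intro Bochner_Integration.integrable_add integrable_mult_right) auto
    fix x assume x: "x \<in> \<Omega>"
    then show "(\<phi> k x - w x)\<^sup>2 + (norm (cgrad (\<phi> k) x - Gw x))\<^sup>2 = (\<phi> k x - wt x)\<^sup>2 + (norm (cgrad (\<phi> k) x - Gt x))\<^sup>2"
      by (simp add: wt Gt)
    show "\<bar>(\<phi> k x - w x)\<^sup>2 + (norm (cgrad (\<phi> k) x - Gw x))\<^sup>2\<bar> \<le> 2 * (\<phi> k x)\<^sup>2 + 2 * (indicator \<Omega> x * (w x)\<^sup>2) + (2 * (norm (cgrad (\<phi> k) x))\<^sup>2 + 2 * (indicator \<Omega> x * (norm (Gw x))\<^sup>2))"
      using x sqdiff2[of "\<phi> k x" "w x"] normdiff2[of "cgrad (\<phi> k) x" "Gw x"] by simp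
  next
    fix x show "0 \<le> 2 * (\<phi> k x)\<^sup>2 + 2 * (indicator \<Omega> x * (w x)\<^sup>2) + (2 * (norm (cgrad (\<phi> k) x))\<^sup>2 + 2 * (indicator \<Omega> x * (norm (Gw x))\<^sup>2))"
      by simp
  qed
  have fS: "(f k x)\<^sup>2 \<le> (norm (cgrad (\<phi> k) x - Gw x))\<^sup>2" for k x
    unfolding f_def using b by (intro sq_le_abs) (metis Basis_le_norm)
  have fm: "(\<lambda>x. indicator \<Omega> x * f k x) \<in> borel_measurable lebesgue" for k
    using meas_restrict[OF Om(1), of "\<lambda>x. (cgrad (\<phi> k) x - Gt x) \<bullet> b" "f k"] \<phi>m Gtm by (simp add: f_def Gt)
  have i2: "integrable lebesgue (\<lambda>x. indicator \<Omega> x * (f k x)\<^sup>2)" for k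
  proof (rule Bochner_Integration.integrable_bound[OF Sint[of k]])
    have "(\<lambda>x. (indicator \<Omega> x * f k x)\<^sup>2) \<in> borel_measurable lebesgue" using fm by measurable
    moreover have "(\<lambda>x. (indicator \<Omega> x * f k x)\<^sup>2) = (\<lambda>x. indicator \<Omega> x * (f k x)\<^sup>2)"
      by (auto simp: indicator_def)
    ultimately show "(\<lambda>x. indicator \<Omega> x * (f k x)\<^sup>2) \<in> borel_measurable lebesgue" by simp
    have fS': "(f k x)\<^sup>2 \<le> (\<phi> k x - w x)\<^sup>2 + (norm (cgrad (\<phi> k) x - Gw x))\<^sup>2" for x
      using fS[of k x] by (smt (verit) zero_le_power2)
    show "AE x in lebesgue. norm (indicator \<Omega> x * (f k x)\<^sup>2) \<le> norm (S k x)"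
      using fS' by (intro AE_I2) (auto simp: S_def indicator_def)
  qed
  have i1: "integrable lebesgue (\<lambda>x. indicator \<Omega> x * \<bar>f k x\<bar>)" for k
  proof (rule Bochner_Integration.integrable_bound[OF Bochner_Integration.integrable_add[OF Oi i2[of k]]])
    have "(\<lambda>x. \<bar>indicator \<Omega> x * f k x\<bar>) \<in> borel_measurable lebesgue" using fm by measurable
    moreover have "(\<lambda>x. \<bar>indicator \<Omega> x * f k x\<bar>) = (\<lambda>x. indicator \<Omega> x * \<bar>f k x\<bar>)"
      by (auto simp: indicator_def)
    ultimately show "(\<lambda>x. indicator \<Omega> x * \<bar>f k x\<bar>) \<in> borel_measurable lebesgue" by simp
    show "AE x in lebesgue. norm (indicator \<Omega> x * \<bar>f k x\<bar>) \<le> norm (indicator \<Omega> x + indicator \<Omega> x * (f k x)\<^sup>2)"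
      using abs_le_1_sq by (intro AE_I2) (auto simp: indicator_def)
  qed
  have lim2: "(\<lambda>k. integral\<^sup>L lebesgue (\<lambda>x. indicator \<Omega> x * (f k x)\<^sup>2)) \<longlonglongrightarrow> 0"
  proof (rule tendsto_sandwich[where f="\<lambda>k. 0" and h="\<lambda>k. integral\<^sup>L lebesgue (S k)"])
    show "\<forall>\<^sub>F n in sequentially. 0 \<le> integral\<^sup>L lebesgue (\<lambda>x. indicator \<Omega> x * (f n x)\<^sup>2)"
      by (intro always_eventually allI integral_nonneg_AE AE_I2) auto
    show "\<forall>\<^sub>F n in sequentially. integral\<^sup>L lebesgue (\<lambda>x. indicator \<Omega> x * (f n x)\<^sup>2) \<le> integral\<^sup>L lebesgue (S n)"
    proof (intro always_eventually allI integral_mono[OF i2 Sint])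
      fix n x
      have "(f n x)\<^sup>2 \<le> (\<phi> n x - w x)\<^sup>2 + (norm (cgrad (\<phi> n) x - Gw x))\<^sup>2"
        using fS[of n x] by (smt (verit) zero_le_power2)
      then show "indicator \<Omega> x * (f n x)\<^sup>2 \<le> S n x" by (simp add: S_def indicator_def)
    qed
    show "(\<lambda>k. integral\<^sup>L lebesgue (S k)) \<longlonglongrightarrow> 0" using conv by (simp add: set_int_real S_def[abs_def])
  qed simp
  have lim1: "(\<lambda>k. integral\<^sup>L lebesgue (\<lambda>x. indicator \<Omega> x * \<bar>f k x\<bar>)) \<longlonglongrightarrow> 0"
    by (rule L2_L1[OF Oi _ i2 i1 lim2]) simp
  have eq: "\<bar>integral\<^sup>L lebesgue (\<lambda>x. indicator \<Omega> x * (Gw x \<bullet> b))\<bar> \<le> integral\<^sup>L lebesgue (\<lambda>x. indicator \<Omega> x * \<bar>f k x\<bar>)" for k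
  proof -
    have gi: "integrable lebesgue (\<lambda>x. indicator \<Omega> x * (cgrad (\<phi> k) x \<bullet> b))"
    proof -
      have "(\<lambda>x. indicator \<Omega> x * (cgrad (\<phi> k) x \<bullet> b)) = (\<lambda>x. indicator \<Omega> x * f k x + indicator \<Omega> x * (Gw x \<bullet> b))"
        by (rule ext) (simp add: f_def inner_diff_left ring_distribs)
      moreover have "integrable lebesgue (\<lambda>x. indicator \<Omega> x * f k x)"
      proof -
        have "(\<lambda>x. \<bar>indicator \<Omega> x * f k x\<bar>) = (\<lambda>x. indicator \<Omega> x * \<bar>f k x\<bar>)"
          by (rule ext) (simp add: abs_mult)
        then have "integrable lebesgue (\<lambda>x. \<bar>indicator \<Omega> x * f k x\<bar>)" using i1[of k] by simp
        then show ?thesis using integrable_abs_iff[OF fm[of k]] by blast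
      qed
      ultimately show ?thesis using Gbi by simp
    qed
    have "integral\<^sup>L lebesgue (\<lambda>x. indicator \<Omega> x * (Gw x \<bullet> b)) =
      integral\<^sup>L lebesgue (\<lambda>x. indicator \<Omega> x * (Gw x \<bullet> b)) - integral\<^sup>L lebesgue (\<lambda>x. indicator \<Omega> x * (cgrad (\<phi> k) x \<bullet> b))"
      using int_deriv_test[OF \<phi> b Om(1)] by simp
    also have "\<dots> = integral\<^sup>L lebesgue (\<lambda>x. indicator \<Omega> x * (Gw x \<bullet> b) - indicator \<Omega> x * (cgrad (\<phi> k) x \<bullet> b))"
      by (rule Bochner_Integration.integral_diff[symmetric, OF Gbi gi])
    also have "(\<lambda>x. indicator \<Omega> x * (Gw x \<bullet> b) - indicator \<Omega> x * (cgrad (\<phi> k) x \<bullet> b)) = (\<lambda>x. - (indicator \<Omega> x * f k x))"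
      by (rule ext) (simp add: f_def inner_diff_left ring_distribs)
    finally have "\<bar>integral\<^sup>L lebesgue (\<lambda>x. indicator \<Omega> x * (Gw x \<bullet> b))\<bar> = \<bar>integral\<^sup>L lebesgue (\<lambda>x. - (indicator \<Omega> x * f k x))\<bar>" by simp
    also have "\<dots> \<le> integral\<^sup>L lebesgue (\<lambda>x. \<bar>- (indicator \<Omega> x * f k x)\<bar>)"
      by (rule integral_abs_bound)
    also have "\<dots> = integral\<^sup>L lebesgue (\<lambda>x. indicator \<Omega> x * \<bar>f k x\<bar>)"
      by (simp add: abs_mult)
    finally show ?thesis .
  qed
  have "\<bar>integral\<^sup>L lebesgue (\<lambda>x. indicator \<Omega> x * (Gw x \<bullet> b))\<bar> \<le> 0"
    using eq lim1 by (intro LIMSEQ_le_const) auto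
  then show "set_lebesgue_integral lebesgue \<Omega> (\<lambda>x. Gw x \<bullet> b) = 0" by (simp add: set_int_real)
qed

lemma int_restrict_AE:
  fixes f g :: "'a::euclidean_space \<Rightarrow> real"
  assumes "\<Omega> \<in> sets lebesgue" "g \<in> borel_measurable lebesgue" "\<And>x. x \<in> \<Omega> \<Longrightarrow> f x = g x"
    and "integrable lebesgue w" "AE x in lebesgue. x \<in> \<Omega> \<longrightarrow> \<bar>f x\<bar> \<le> w x" "\<And>x. w x \<ge> 0"
  shows "integrable lebesgue (\<lambda>x. indicator \<Omega> x * f x)"
proof (rule Bochner_Integration.integrable_bound[OF assms(4)])
  show "(\<lambda>x. indicator \<Omega> x * f x) \<in> borel_measurable lebesgue"
    using meas_restrict[OF assms(1-3)] by simp
  show "AE x in lebesgue. norm (indicator \<Omega> x * f x) \<le> norm (w x)"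
    using assms(5) by eventually_elim (use assms(6) in \<open>auto simp: indicator_def\<close>)
qed

lemma int_bdd_AE:
  fixes f g :: "'a::euclidean_space \<Rightarrow> real"
  assumes "\<Omega> \<in> sets lebesgue" "emeasure lebesgue \<Omega> < \<infinity>" "g \<in> borel_measurable lebesgue" "\<And>x. x \<in> \<Omega> \<Longrightarrow> f x = g x"
    and "AE x in lebesgue. x \<in> \<Omega> \<longrightarrow> \<bar>f x\<bar> \<le> B"
  shows "integrable lebesgue (\<lambda>x. indicator \<Omega> x * f x)"
proof (rule int_restrict_AE[OF assms(1,3,4), where w="\<lambda>x. max B 0 * indicator \<Omega> x"])
  show "integrable lebesgue (\<lambda>x. max B 0 * indicator \<Omega> x)"
    using assms(1,2) by (intro integrable_mult_right integrable_real_indicator) auto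
  show "AE x in lebesgue. x \<in> \<Omega> \<longrightarrow> \<bar>f x\<bar> \<le> max B 0 * indicator \<Omega> x"
    using assms(5) by eventually_elim auto
next
  fix x :: 'a show "0 \<le> max B 0 * indicator \<Omega> x" by (simp add: indicator_def)
qed

lemma inner_cgrad_sum: "(G::'a::euclidean_space) \<bullet> cgrad \<psi> x = (\<Sum>b\<in>Basis. dderiv b \<psi> x * (G \<bullet> b))"
  by (subst euclidean_inner) (simp add: cgrad_inner_Basis mult.commute)

lemma lap_identity:
  fixes \<Omega> :: "'a::euclidean_space set" and u \<psi> :: "'a \<Rightarrow> real" and G :: "'a \<Rightarrow> 'a"
  assumes Om: "\<Omega> \<in> sets lebesgue" "emeasure lebesgue \<Omega> < \<infinity>" and H: "H10 \<Omega> u G"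
    and psi: "test_fun \<Omega> \<psi>" and ep: "\<epsilon> > 0" and et: "\<eta> > 0"
  shows "integrable lebesgue (\<lambda>x. indicator \<Omega> x * (Fe \<eta> \<epsilon> (u x) * (G x \<bullet> cgrad \<psi> x)))"
    and "integrable lebesgue (\<lambda>x. indicator \<Omega> x * (He \<eta> \<epsilon> (u x) * lap \<psi> x))"
    and "integral\<^sup>L lebesgue (\<lambda>x. indicator \<Omega> x * (Fe \<eta> \<epsilon> (u x) * (G x \<bullet> cgrad \<psi> x))) +
         integral\<^sup>L lebesgue (\<lambda>x. indicator \<Omega> x * (He \<eta> \<epsilon> (u x) * lap \<psi> x)) = 0"
proof -
  interpret psi: tf \<Omega> \<psi> by (rule tf.intro) fact
  obtain Q where Q: "Q \<ge> 0" "\<And>x. norm (cgrad \<psi> x) \<le> Q" using psi.gbnd by blast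
  define gb where "gb b x = indicator \<Omega> x * (Fe \<eta> \<epsilon> (u x) * dderiv b \<psi> x * (G x \<bullet> b) + He \<eta> \<epsilon> (u x) * dderiv b (dderiv b \<psi>) x)" for b x
  have gb: "integrable lebesgue (gb b) \<and> integral\<^sup>L lebesgue (gb b) = 0" if b: "b \<in> Basis" for b
  proof -
    have Hb: "H10 \<Omega> (\<lambda>x. He \<eta> \<epsilon> (u x) * dderiv b \<psi> x)
        (\<lambda>x. (Fe \<eta> \<epsilon> (u x) * dderiv b \<psi> x) *\<^sub>R G x + He \<eta> \<epsilon> (u x) *\<^sub>R cgrad (dderiv b \<psi>) x)"
      by (rule H10_chain[OF Om(1) H test_fun_dderiv[OF psi b] smooth_He[OF ep et] He_deriv[OF ep et] Fe_bound[OF ep et] Fe_cont[OF ep et]])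
    have e: "((Fe \<eta> \<epsilon> (u x) * dderiv b \<psi> x) *\<^sub>R G x + He \<eta> \<epsilon> (u x) *\<^sub>R cgrad (dderiv b \<psi>) x) \<bullet> b =
        Fe \<eta> \<epsilon> (u x) * dderiv b \<psi> x * (G x \<bullet> b) + He \<eta> \<epsilon> (u x) * dderiv b (dderiv b \<psi>) x" for x
      using b by (simp add: inner_add_left cgrad_inner_Basis)
    show ?thesis
      using H10_zero_mean[OF Om Hb b] unfolding e gb_def[abs_def] by (simp add: set_intble_real set_int_real)
  qed
  have sumeq: "(\<lambda>x. \<Sum>b\<in>Basis. gb b x) = (\<lambda>x. indicator \<Omega> x * (Fe \<eta> \<epsilon> (u x) * (G x \<bullet> cgrad \<psi> x) + He \<eta> \<epsilon> (u x) * lap \<psi> x))"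
  proof
    fix x
    show "(\<Sum>b\<in>Basis. gb b x) = indicator \<Omega> x * (Fe \<eta> \<epsilon> (u x) * (G x \<bullet> cgrad \<psi> x) + He \<eta> \<epsilon> (u x) * lap \<psi> x)"
      unfolding gb_def inner_cgrad_sum lap_def
      by (simp add: sum.distrib sum_distrib_left sum_distrib_right algebra_simps)
  qed
  have sint: "integrable lebesgue (\<lambda>x. \<Sum>b\<in>Basis. gb b x)" using gb by (intro Bochner_Integration.integrable_sum) auto
  have sint0: "integral\<^sup>L lebesgue (\<lambda>x. \<Sum>b\<in>Basis. gb b x) = 0"
    using gb by (subst Bochner_Integration.integral_sum) auto
  define ut where "ut x = indicator \<Omega> x * u x" for x
  define Gt where "Gt x = indicator \<Omega> x *\<^sub>R G x" for x
  from H have um: "set_borel_measurable lebesgue \<Omega> u" and Gm: "set_borel_measurable lebesgue \<Omega> G"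
    and G2: "set_integrable lebesgue \<Omega> (\<lambda>x. (norm (G x))\<^sup>2)" unfolding H10_def by auto
  have utm: "ut \<in> borel_measurable lebesgue" using um unfolding set_borel_measurable_def ut_def by simp
  have Gtm: "Gt \<in> borel_measurable lebesgue" using Gm unfolding set_borel_measurable_def Gt_def by simp
  have G2i: "integrable lebesgue (\<lambda>x. indicator \<Omega> x * (norm (G x))\<^sup>2)" using G2 by (simp add: set_intble_real)
  have Oi: "integrable lebesgue (indicator \<Omega> :: 'a \<Rightarrow> real)" using Om by (intro integrable_real_indicator) auto
  have Fem: "(\<lambda>x. Fe \<eta> \<epsilon> (ut x)) \<in> borel_measurable lebesgue" by (rule borel_measurable_continuous_on[OF Fe_cont[OF ep et] utm])
  have Ai: "integrable lebesgue (\<lambda>x. indicator \<Omega> x * (Fe \<eta> \<epsilon> (u x) * (G x \<bullet> cgrad \<psi> x)))"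
  proof (rule int_restrict[OF Om(1), where g="\<lambda>x. Fe \<eta> \<epsilon> (ut x) * (Gt x \<bullet> cgrad \<psi> x)"
        and w="\<lambda>x. (Q / \<epsilon>) * (indicator \<Omega> x + indicator \<Omega> x * (norm (G x))\<^sup>2)"])
    show "(\<lambda>x. Fe \<eta> \<epsilon> (ut x) * (Gt x \<bullet> cgrad \<psi> x)) \<in> borel_measurable lebesgue"
      using Fem Gtm psi.gmeas by measurable
    show "integrable lebesgue (\<lambda>x. (Q / \<epsilon>) * (indicator \<Omega> x + indicator \<Omega> x * (norm (G x))\<^sup>2))"
      using Oi G2i by (intro integrable_mult_right Bochner_Integration.integrable_add)
    fix x assume x: "x \<in> \<Omega>"
    then show "Fe \<eta> \<epsilon> (u x) * (G x \<bullet> cgrad \<psi> x) = Fe \<eta> \<epsilon> (ut x) * (Gt x \<bullet> cgrad \<psi> x)" by (simp add: ut_def Gt_def)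
    have "\<bar>Fe \<eta> \<epsilon> (u x) * (G x \<bullet> cgrad \<psi> x)\<bar> \<le> (1/\<epsilon>) * (norm (G x) * Q)"
      unfolding abs_mult
    proof (rule mult_mono)
      show "\<bar>Fe \<eta> \<epsilon> (u x)\<bar> \<le> 1/\<epsilon>" by (rule Fe_bound[OF ep et])
      have "\<bar>G x \<bullet> cgrad \<psi> x\<bar> \<le> norm (G x) * norm (cgrad \<psi> x)" by (rule Cauchy_Schwarz_ineq2)
      also have "\<dots> \<le> norm (G x) * Q" by (rule mult_left_mono[OF Q(2)]) simp
      finally show "\<bar>G x \<bullet> cgrad \<psi> x\<bar> \<le> norm (G x) * Q" .
    qed (use ep in auto)
    also have "\<dots> \<le> (Q / \<epsilon>) * (1 + (norm (G x))\<^sup>2)"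
    proof -
      have "norm (G x) * Q \<le> (1 + (norm (G x))\<^sup>2) * Q" by (rule mult_right_mono) (use abs_le_1_sq[of "norm (G x)"] Q in auto)
      then show ?thesis using ep by (simp add: field_simps)
    qed
    finally show "\<bar>Fe \<eta> \<epsilon> (u x) * (G x \<bullet> cgrad \<psi> x)\<bar> \<le> (Q / \<epsilon>) * (indicator \<Omega> x + indicator \<Omega> x * (norm (G x))\<^sup>2)"
      using x by simp
  next
    fix x show "0 \<le> (Q / \<epsilon>) * (indicator \<Omega> x + indicator \<Omega> x * (norm (G x))\<^sup>2)" using Q ep by simp
  qed
  then show "integrable lebesgue (\<lambda>x. indicator \<Omega> x * (Fe \<eta> \<epsilon> (u x) * (G x \<bullet> cgrad \<psi> x)))" .
  have Bfun: "(\<lambda>x. indicator \<Omega> x * (He \<eta> \<epsilon> (u x) * lap \<psi> x)) =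
      (\<lambda>x. (\<Sum>b\<in>Basis. gb b x) - indicator \<Omega> x * (Fe \<eta> \<epsilon> (u x) * (G x \<bullet> cgrad \<psi> x)))"
    using fun_cong[OF sumeq] by (intro ext) (simp add: algebra_simps)
  show Bi: "integrable lebesgue (\<lambda>x. indicator \<Omega> x * (He \<eta> \<epsilon> (u x) * lap \<psi> x))"
    unfolding Bfun using sint Ai by (rule Bochner_Integration.integrable_diff)
  have "integral\<^sup>L lebesgue (\<lambda>x. indicator \<Omega> x * (Fe \<eta> \<epsilon> (u x) * (G x \<bullet> cgrad \<psi> x))) +
         integral\<^sup>L lebesgue (\<lambda>x. indicator \<Omega> x * (He \<eta> \<epsilon> (u x) * lap \<psi> x)) =
        integral\<^sup>L lebesgue (\<lambda>x. indicator \<Omega> x * (Fe \<eta> \<epsilon> (u x) * (G x \<bullet> cgrad \<psi> x)) + indicator \<Omega> x * (He \<eta> \<epsilon> (u x) * lap \<psi> x))"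
    by (rule Bochner_Integration.integral_add[symmetric, OF Ai Bi])
  also have "\<dots> = integral\<^sup>L lebesgue (\<lambda>x. indicator \<Omega> x * (Fe \<eta> \<epsilon> (u x) * (G x \<bullet> cgrad \<psi> x) + He \<eta> \<epsilon> (u x) * lap \<psi> x))"
    by (simp add: ring_distribs)
  also have "\<dots> = integral\<^sup>L lebesgue (\<lambda>x. \<Sum>b\<in>Basis. gb b x)"
    by (simp only: sumeq)
  also have "\<dots> = 0" by (rule sint0)
  finally show "integral\<^sup>L lebesgue (\<lambda>x. indicator \<Omega> x * (Fe \<eta> \<epsilon> (u x) * (G x \<bullet> cgrad \<psi> x))) +
         integral\<^sup>L lebesgue (\<lambda>x. indicator \<Omega> x * (He \<eta> \<epsilon> (u x) * lap \<psi> x)) = 0" .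
qed

lemma core:
  fixes \<Omega> :: "'a::euclidean_space set" and \<mu> c h u \<psi> :: "'a \<Rightarrow> real" and G :: "'a \<Rightarrow> 'a"
  assumes Om: "\<Omega> \<in> sets lebesgue" "emeasure lebesgue \<Omega> < \<infinity>"
    and H: "H10 \<Omega> u G"
    and weak: "\<forall>v Gv. H10 \<Omega> v Gv \<and> Linf_on \<Omega> v \<longrightarrow>
           set_lebesgue_integral lebesgue \<Omega> (\<lambda>x. G x \<bullet> Gv x) =
           set_lebesgue_integral lebesgue \<Omega>
             (\<lambda>x. (\<mu> x * (norm (G x))\<^sup>2 + lam * c x * u x + h x) * v x)"
    and uM: "AE x in lebesgue. x \<in> \<Omega> \<longrightarrow> 0 \<le> u x \<and> u x \<le> M"
    and mu: "Linf_on \<Omega> \<mu>" and cc: "Linf_on \<Omega> c"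
    and hm: "set_borel_measurable lebesgue \<Omega> h" and hint: "integrable lebesgue (\<lambda>x. indicator \<Omega> x * \<bar>h x\<bar>)"
    and h_nn: "AE x in lebesgue. x \<in> \<Omega> \<longrightarrow> h x \<ge> 0"
    and psi: "test_fun \<Omega> \<psi>" "\<And>x. \<psi> x \<ge> 0" "\<And>x. \<psi> x \<le> 1"
    and supp: "\<And>x. \<psi> x \<noteq> 0 \<Longrightarrow> x \<in> B"
    and mu_eta: "AE x in lebesgue. x \<in> B \<longrightarrow> \<mu> x \<ge> \<eta>"
    and c_eta: "AE x in lebesgue. x \<in> B \<longrightarrow> c x \<ge> \<eta>"
    and et: "\<eta> > 0" and lam: "lam \<ge> \<Lambda>\<^sub>1" "\<Lambda>\<^sub>1 > 0"
    and lapb: "\<And>x. - lap \<psi> x \<le> Kb * \<psi> x" and Kb: "Kb \<ge> 0"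
  shows "\<Lambda>\<^sub>1 * \<eta> / 2 * integral\<^sup>L lebesgue (\<lambda>x. indicator \<Omega> x * (u x * exp (\<eta> * u x) * \<psi> x))
     \<le> (Kb / \<eta>) * integral\<^sup>L lebesgue (\<lambda>x. indicator \<Omega> x * (exp (\<eta> * u x) * \<psi> x))"
    and "integrable lebesgue (\<lambda>x. indicator \<Omega> x * (u x * exp (\<eta> * u x) * \<psi> x))"
    and "integrable lebesgue (\<lambda>x. indicator \<Omega> x * (exp (\<eta> * u x) * \<psi> x))"
proof -
  interpret psi: tf \<Omega> \<psi> by (rule tf.intro) (rule psi(1))
  define M' where "M' = max M 0"
  have M'0: "M' \<ge> 0" unfolding M'_def by simp
  have uM': "AE x in lebesgue. x \<in> \<Omega> \<longrightarrow> 0 \<le> u x \<and> u x \<le> M'"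
    using uM by eventually_elim (auto simp: M'_def)
  define \<epsilon> where "\<epsilon> = exp (- \<eta> * M')"
  have ep: "\<epsilon> > 0" unfolding \<epsilon>_def by simp
  define F where "F = Fe \<eta> \<epsilon>"
  define Fd' where "Fd' = Fd \<eta> \<epsilon>"
  define v where "v x = F (u x) * \<psi> x" for x
  define Gv where "Gv x = (Fd' (u x) * \<psi> x) *\<^sub>R G x + F (u x) *\<^sub>R cgrad \<psi> x" for x
  have Hv: "H10 \<Omega> v Gv"
    unfolding v_def[abs_def] Gv_def[abs_def] F_def Fd'_def
    by (rule H10_chain[OF Om(1) H psi(1) smooth_Fe[OF ep] Fe_deriv[OF ep] Fd_bound[OF ep et] Fd_cont[OF ep et]])
  have Fb: "\<bar>F t\<bar> \<le> 1 / \<epsilon>" for t unfolding F_def by (rule Fe_bound[OF ep et])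
  have F0: "F t > 0" for t unfolding F_def by (rule Fe_pos[OF ep et])
  have Linfv: "Linf_on \<Omega> v"
    unfolding Linf_on_def
  proof
    show "set_borel_measurable lebesgue \<Omega> v" using Hv unfolding H10_def by blast
    have "\<bar>v x\<bar> \<le> 1 / \<epsilon>" for x
    proof -
      have "\<bar>v x\<bar> = \<bar>F (u x)\<bar> * \<bar>\<psi> x\<bar>" by (simp add: v_def abs_mult)
      also have "\<dots> \<le> 1 / \<epsilon> * 1" by (rule mult_mono) (use Fb psi(2,3) ep in auto)
      finally show ?thesis by simp
    qed
    then show "\<exists>M. AE x in lebesgue. x \<in> \<Omega> \<longrightarrow> \<bar>v x\<bar> \<le> M" by blast
  qed
  have I1: "set_lebesgue_integral lebesgue \<Omega> (\<lambda>x. G x \<bullet> Gv x) =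
      set_lebesgue_integral lebesgue \<Omega> (\<lambda>x. (\<mu> x * (norm (G x))\<^sup>2 + lam * c x * u x + h x) * v x)"
    using weak Hv Linfv by blast
  define A1 where "A1 x = indicator \<Omega> x * (Fd' (u x) * \<psi> x * (norm (G x))\<^sup>2)" for x
  define A2 where "A2 x = indicator \<Omega> x * (F (u x) * (G x \<bullet> cgrad \<psi> x))" for x
  define Rr where "Rr x = indicator \<Omega> x * ((\<mu> x * (norm (G x))\<^sup>2 + lam * c x * u x + h x) * v x)" for x
  define Lw where "Lw x = indicator \<Omega> x * (\<Lambda>\<^sub>1 * \<eta> * (u x * F (u x) * \<psi> x))" for x
  define Hl where "Hl x = indicator \<Omega> x * (He \<eta> \<epsilon> (u x) * lap \<psi> x)" for x
  define E0 where "E0 x = indicator \<Omega> x * (exp (\<eta> * u x) * \<psi> x)" for x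
  define E1 where "E1 x = indicator \<Omega> x * (u x * exp (\<eta> * u x) * \<psi> x)" for x
  have A2i: "integrable lebesgue A2" and Hli: "integrable lebesgue Hl" and A2H: "integral\<^sup>L lebesgue A2 + integral\<^sup>L lebesgue Hl = 0"
    using lap_identity[OF Om H psi(1) ep et] unfolding A2_def[abs_def] Hl_def[abs_def] F_def by auto
  define ut where "ut x = indicator \<Omega> x * u x" for x
  define Gt where "Gt x = indicator \<Omega> x *\<^sub>R G x" for x
  define mut where "mut x = indicator \<Omega> x * \<mu> x" for x
  define ct where "ct x = indicator \<Omega> x * c x" for x
  define ht where "ht x = indicator \<Omega> x * h x" for x
  from H have um: "set_borel_measurable lebesgue \<Omega> u" and Gm: "set_borel_measurable lebesgue \<Omega> G"
    and G2: "set_integrable lebesgue \<Omega> (\<lambda>x. (norm (G x))\<^sup>2)" unfolding H10_def by auto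
  obtain Mmu0 where Mmu0: "AE x in lebesgue. x \<in> \<Omega> \<longrightarrow> \<bar>\<mu> x\<bar> \<le> Mmu0" and mum: "set_borel_measurable lebesgue \<Omega> \<mu>"
    using mu unfolding Linf_on_def by blast
  obtain Mc0 where Mc0: "AE x in lebesgue. x \<in> \<Omega> \<longrightarrow> \<bar>c x\<bar> \<le> Mc0" and cm: "set_borel_measurable lebesgue \<Omega> c"
    using cc unfolding Linf_on_def by blast
  define Mmu where "Mmu = max Mmu0 0"
  define Mc where "Mc = max Mc0 0"
  have Mmu: "AE x in lebesgue. x \<in> \<Omega> \<longrightarrow> \<bar>\<mu> x\<bar> \<le> Mmu" using Mmu0 by eventually_elim (auto simp: Mmu_def)
  have Mc: "AE x in lebesgue. x \<in> \<Omega> \<longrightarrow> \<bar>c x\<bar> \<le> Mc" using Mc0 by eventually_elim (auto simp: Mc_def)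
  have Mmu00: "Mmu \<ge> 0" "Mc \<ge> 0" by (simp_all add: Mmu_def Mc_def)
  have utm: "ut \<in> borel_measurable lebesgue" using um unfolding set_borel_measurable_def ut_def by simp
  have Gtm: "Gt \<in> borel_measurable lebesgue" using Gm unfolding set_borel_measurable_def Gt_def by simp
  have mutm: "mut \<in> borel_measurable lebesgue" using mum unfolding set_borel_measurable_def mut_def by simp
  have ctm: "ct \<in> borel_measurable lebesgue" using cm unfolding set_borel_measurable_def ct_def by simp
  have htm: "ht \<in> borel_measurable lebesgue" using hm unfolding set_borel_measurable_def ht_def by simp
  have G2i: "integrable lebesgue (\<lambda>x. indicator \<Omega> x * (norm (G x))\<^sup>2)" using G2 by (simp add: set_intble_real)
  have Oi: "integrable lebesgue (indicator \<Omega> :: 'a \<Rightarrow> real)" using Om by (intro integrable_real_indicator) auto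
  have Fm: "(\<lambda>x. F (ut x)) \<in> borel_measurable lebesgue"
    unfolding F_def by (rule borel_measurable_continuous_on[OF Fe_cont[OF ep et] utm])
  have Fdm: "(\<lambda>x. Fd' (ut x)) \<in> borel_measurable lebesgue"
    unfolding Fd'_def by (rule borel_measurable_continuous_on[OF Fd_cont[OF ep et] utm])
  have Fdb: "\<bar>Fd' t\<bar> \<le> \<eta> / \<epsilon>" for t unfolding Fd'_def by (rule Fd_bound[OF ep et])
  have A1i: "integrable lebesgue A1"
    unfolding A1_def
  proof (rule int_restrict[OF Om(1), where g="\<lambda>x. Fd' (ut x) * \<psi> x * (norm (Gt x))\<^sup>2"
        and w="\<lambda>x. (\<eta> / \<epsilon>) * (indicator \<Omega> x * (norm (G x))\<^sup>2)"])
    show "(\<lambda>x. Fd' (ut x) * \<psi> x * (norm (Gt x))\<^sup>2) \<in> borel_measurable lebesgue"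
      using Fdm psi.meas Gtm by measurable
    show "integrable lebesgue (\<lambda>x. (\<eta> / \<epsilon>) * (indicator \<Omega> x * (norm (G x))\<^sup>2))"
      using G2i by (rule integrable_mult_right)
    fix x assume x: "x \<in> \<Omega>"
    then show "Fd' (u x) * \<psi> x * (norm (G x))\<^sup>2 = Fd' (ut x) * \<psi> x * (norm (Gt x))\<^sup>2" by (simp add: ut_def Gt_def)
    have "\<bar>Fd' (u x) * \<psi> x\<bar> \<le> \<eta> / \<epsilon> * 1"
      unfolding abs_mult by (rule mult_mono) (use Fdb psi(2,3) ep et in auto)
    then have "\<bar>Fd' (u x) * \<psi> x\<bar> * (norm (G x))\<^sup>2 \<le> \<eta> / \<epsilon> * (norm (G x))\<^sup>2"
      by (intro mult_right_mono) auto
    then show "\<bar>Fd' (u x) * \<psi> x * (norm (G x))\<^sup>2\<bar> \<le> (\<eta> / \<epsilon>) * (indicator \<Omega> x * (norm (G x))\<^sup>2)"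
      using x by (simp add: abs_mult)
  next
    fix x show "0 \<le> (\<eta> / \<epsilon>) * (indicator \<Omega> x * (norm (G x))\<^sup>2)" using et ep by simp
  qed
  have vb: "\<bar>v x\<bar> \<le> 1 / \<epsilon>" for x
  proof -
    have "\<bar>v x\<bar> = \<bar>F (u x)\<bar> * \<bar>\<psi> x\<bar>" by (simp add: v_def abs_mult)
    also have "\<dots> \<le> 1 / \<epsilon> * 1" by (rule mult_mono) (use Fb psi(2,3) ep in auto)
    finally show ?thesis by simp
  qed
  have Rri: "integrable lebesgue Rr"
    unfolding Rr_def
  proof (rule int_restrict_AE[OF Om(1), where g="\<lambda>x. (mut x * (norm (Gt x))\<^sup>2 + lam * ct x * ut x + ht x) * (F (ut x) * \<psi> x)"
        and w="\<lambda>x. (Mmu / \<epsilon>) * (indicator \<Omega> x * (norm (G x))\<^sup>2) + (\<bar>lam\<bar> * Mc * M' / \<epsilon>) * indicator \<Omega> x + (1 / \<epsilon>) * (indicator \<Omega> x * \<bar>h x\<bar>)"])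
    show "(\<lambda>x. (mut x * (norm (Gt x))\<^sup>2 + lam * ct x * ut x + ht x) * (F (ut x) * \<psi> x)) \<in> borel_measurable lebesgue"
      using mutm Gtm ctm utm htm Fm psi.meas by measurable
    show "integrable lebesgue (\<lambda>x. (Mmu / \<epsilon>) * (indicator \<Omega> x * (norm (G x))\<^sup>2) + (\<bar>lam\<bar> * Mc * M' / \<epsilon>) * indicator \<Omega> x + (1 / \<epsilon>) * (indicator \<Omega> x * \<bar>h x\<bar>))"
      using G2i Oi hint by (intro Bochner_Integration.integrable_add integrable_mult_right)
    show "(\<mu> x * (norm (G x))\<^sup>2 + lam * c x * u x + h x) * v x = (mut x * (norm (Gt x))\<^sup>2 + lam * ct x * ut x + ht x) * (F (ut x) * \<psi> x)"
      if "x \<in> \<Omega>" for x using that by (simp add: mut_def Gt_def ct_def ut_def ht_def v_def)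
    show "AE x in lebesgue. x \<in> \<Omega> \<longrightarrow> \<bar>(\<mu> x * (norm (G x))\<^sup>2 + lam * c x * u x + h x) * v x\<bar> \<le>
        (Mmu / \<epsilon>) * (indicator \<Omega> x * (norm (G x))\<^sup>2) + (\<bar>lam\<bar> * Mc * M' / \<epsilon>) * indicator \<Omega> x + (1 / \<epsilon>) * (indicator \<Omega> x * \<bar>h x\<bar>)"
      using Mmu Mc uM'
    proof eventually_elim
      case (elim x)
      show ?case
      proof
        assume x: "x \<in> \<Omega>"
        have b1: "\<bar>\<mu> x * (norm (G x))\<^sup>2\<bar> \<le> Mmu * (norm (G x))\<^sup>2"
          using elim x by (simp add: abs_mult mult_right_mono)
        have b2: "\<bar>lam * c x * u x\<bar> \<le> \<bar>lam\<bar> * Mc * M'"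
          using elim x Mmu00 unfolding abs_mult by (intro mult_mono) auto
        have "\<bar>\<mu> x * (norm (G x))\<^sup>2 + lam * c x * u x + h x\<bar> \<le> Mmu * (norm (G x))\<^sup>2 + \<bar>lam\<bar> * Mc * M' + \<bar>h x\<bar>"
          using b1 b2 by linarith
        then have "\<bar>\<mu> x * (norm (G x))\<^sup>2 + lam * c x * u x + h x\<bar> * \<bar>v x\<bar> \<le> (Mmu * (norm (G x))\<^sup>2 + \<bar>lam\<bar> * Mc * M' + \<bar>h x\<bar>) * (1 / \<epsilon>)"
          by (rule mult_mono) (use vb Mmu00 M'0 in auto)
        then have "\<bar>(\<mu> x * (norm (G x))\<^sup>2 + lam * c x * u x + h x) * v x\<bar> \<le> (Mmu * (norm (G x))\<^sup>2 + \<bar>lam\<bar> * Mc * M' + \<bar>h x\<bar>) * (1 / \<epsilon>)"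
          by (simp only: abs_mult)
        moreover have "(Mmu * (norm (G x))\<^sup>2 + \<bar>lam\<bar> * Mc * M' + \<bar>h x\<bar>) * (1 / \<epsilon>) =
          (Mmu / \<epsilon>) * (indicator \<Omega> x * (norm (G x))\<^sup>2) + (\<bar>lam\<bar> * Mc * M' / \<epsilon>) * indicator \<Omega> x + (1 / \<epsilon>) * (indicator \<Omega> x * \<bar>h x\<bar>)"
          using x by (simp add: algebra_simps)
        ultimately show "\<bar>(\<mu> x * (norm (G x))\<^sup>2 + lam * c x * u x + h x) * v x\<bar> \<le>
          (Mmu / \<epsilon>) * (indicator \<Omega> x * (norm (G x))\<^sup>2) + (\<bar>lam\<bar> * Mc * M' / \<epsilon>) * indicator \<Omega> x + (1 / \<epsilon>) * (indicator \<Omega> x * \<bar>h x\<bar>)"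
          by simp
      qed
    qed
    show "0 \<le> (Mmu / \<epsilon>) * (indicator \<Omega> x * (norm (G x))\<^sup>2) + (\<bar>lam\<bar> * Mc * M' / \<epsilon>) * indicator \<Omega> x + (1 / \<epsilon>) * (indicator \<Omega> x * \<bar>h x\<bar>)" for x
      using Mmu00 M'0 ep by (intro add_nonneg_nonneg mult_nonneg_nonneg divide_nonneg_pos) auto
  qed
  have Lwi: "integrable lebesgue Lw"
    unfolding Lw_def
  proof (rule int_bdd_AE[OF Om, where g="\<lambda>x. \<Lambda>\<^sub>1 * \<eta> * (ut x * F (ut x) * \<psi> x)" and B="\<Lambda>\<^sub>1 * \<eta> * (M' * (1/\<epsilon>) * 1)"])
    show "(\<lambda>x. \<Lambda>\<^sub>1 * \<eta> * (ut x * F (ut x) * \<psi> x)) \<in> borel_measurable lebesgue" using utm Fm psi.meas by measurable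
    show "\<Lambda>\<^sub>1 * \<eta> * (u x * F (u x) * \<psi> x) = \<Lambda>\<^sub>1 * \<eta> * (ut x * F (ut x) * \<psi> x)" if "x \<in> \<Omega>" for x
      using that by (simp add: ut_def)
    show "AE x in lebesgue. x \<in> \<Omega> \<longrightarrow> \<bar>\<Lambda>\<^sub>1 * \<eta> * (u x * F (u x) * \<psi> x)\<bar> \<le> \<Lambda>\<^sub>1 * \<eta> * (M' * (1/\<epsilon>) * 1)"
      using uM'
    proof eventually_elim
      case (elim x)
      show ?case
      proof
        assume "x \<in> \<Omega>"
        then have "\<bar>u x * F (u x) * \<psi> x\<bar> \<le> M' * (1/\<epsilon>) * 1"
          using elim Fb[of "u x"] psi(2,3)[of x] ep M'0 unfolding abs_mult by (intro mult_mono) auto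
        then have "\<Lambda>\<^sub>1 * \<eta> * \<bar>u x * F (u x) * \<psi> x\<bar> \<le> \<Lambda>\<^sub>1 * \<eta> * (M' * (1/\<epsilon>) * 1)"
          using lam et by (intro mult_left_mono) auto
        then show "\<bar>\<Lambda>\<^sub>1 * \<eta> * (u x * F (u x) * \<psi> x)\<bar> \<le> \<Lambda>\<^sub>1 * \<eta> * (M' * (1/\<epsilon>) * 1)"
          using lam et by (simp only: abs_mult abs_of_pos)
      qed
    qed
  qed
  have E0i: "integrable lebesgue E0"
    unfolding E0_def
  proof (rule int_bdd_AE[OF Om, where g="\<lambda>x. exp (\<eta> * ut x) * \<psi> x" and B="exp (\<eta> * M') * 1"])
    show "(\<lambda>x. exp (\<eta> * ut x) * \<psi> x) \<in> borel_measurable lebesgue" using utm psi.meas by measurable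
    show "exp (\<eta> * u x) * \<psi> x = exp (\<eta> * ut x) * \<psi> x" if "x \<in> \<Omega>" for x using that by (simp add: ut_def)
    show "AE x in lebesgue. x \<in> \<Omega> \<longrightarrow> \<bar>exp (\<eta> * u x) * \<psi> x\<bar> \<le> exp (\<eta> * M') * 1"
      using uM'
    proof eventually_elim
      case (elim x)
      show ?case
      proof
        assume "x \<in> \<Omega>"
        then show "\<bar>exp (\<eta> * u x) * \<psi> x\<bar> \<le> exp (\<eta> * M') * 1"
          using elim psi(2,3)[of x] et unfolding abs_mult by (intro mult_mono) auto
      qed
    qed
  qed
  have E1i: "integrable lebesgue E1"
    unfolding E1_def
  proof (rule int_bdd_AE[OF Om, where g="\<lambda>x. ut x * exp (\<eta> * ut x) * \<psi> x" and B="M' * exp (\<eta> * M') * 1"])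
    show "(\<lambda>x. ut x * exp (\<eta> * ut x) * \<psi> x) \<in> borel_measurable lebesgue" using utm psi.meas by measurable
    show "u x * exp (\<eta> * u x) * \<psi> x = ut x * exp (\<eta> * ut x) * \<psi> x" if "x \<in> \<Omega>" for x using that by (simp add: ut_def)
    show "AE x in lebesgue. x \<in> \<Omega> \<longrightarrow> \<bar>u x * exp (\<eta> * u x) * \<psi> x\<bar> \<le> M' * exp (\<eta> * M') * 1"
      using uM'
    proof eventually_elim
      case (elim x)
      show ?case
      proof
        assume "x \<in> \<Omega>"
        then show "\<bar>u x * exp (\<eta> * u x) * \<psi> x\<bar> \<le> M' * exp (\<eta> * M') * 1"
          using elim psi(2,3)[of x] et unfolding abs_mult by (intro mult_mono) auto
      qed
    qed
  qed
  have sumA: "integral\<^sup>L lebesgue A1 + integral\<^sup>L lebesgue A2 = integral\<^sup>L lebesgue Rr"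
  proof -
    have eqG: "indicator \<Omega> x * (G x \<bullet> Gv x) = A1 x + A2 x" for x
      by (simp add: Gv_def A1_def A2_def inner_add_right power2_norm_eq_inner algebra_simps)
    have "integral\<^sup>L lebesgue A1 + integral\<^sup>L lebesgue A2 = integral\<^sup>L lebesgue (\<lambda>x. A1 x + A2 x)"
      by (rule Bochner_Integration.integral_add[symmetric, OF A1i A2i])
    also have "\<dots> = set_lebesgue_integral lebesgue \<Omega> (\<lambda>x. G x \<bullet> Gv x)"
      unfolding set_int_real eqG ..
    also have "\<dots> = integral\<^sup>L lebesgue Rr" using I1 unfolding set_int_real Rr_def[abs_def] .
    finally show ?thesis .
  qed
  have pt1: "AE x in lebesgue. Lw x \<le> Rr x - A1 x"
    using uM' mu_eta c_eta h_nn
  proof eventually_elim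
    case (elim x)
    show ?case
    proof (cases "x \<in> \<Omega> \<and> \<psi> x \<noteq> 0")
      case False
      then show ?thesis by (auto simp: Lw_def Rr_def A1_def v_def)
    next
      case True
      then have x: "x \<in> \<Omega>" and xB: "x \<in> B" using supp by auto
      have u0: "u x \<ge> 0" and mue: "\<mu> x \<ge> \<eta>" and ce: "c x \<ge> \<eta>" and h0: "h x \<ge> 0"
        using elim x xB by auto
      define f where "f = F (u x)"
      define d where "d = Fd' (u x)"
      define p where "p = \<psi> x"
      define g where "g = (norm (G x))\<^sup>2"
      have f0: "f > 0" unfolding f_def by (rule F0)
      have dle: "d \<le> \<eta> * f" unfolding d_def f_def Fd'_def F_def by (rule Fd_le[OF ep et])
      have p0: "p \<ge> 0" unfolding p_def by (rule psi(2))
      have g0: "g \<ge> 0" unfolding g_def by simp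
      have "\<eta> * f \<le> \<mu> x * f" using mue f0 by (intro mult_right_mono) auto
      then have t1: "0 \<le> (\<mu> x * f - d) * p * g" using dle p0 g0 by (intro mult_nonneg_nonneg) auto
      have "\<Lambda>\<^sub>1 * \<eta> \<le> lam * c x" using lam ce et by (intro mult_mono) auto
      then have t2: "\<Lambda>\<^sub>1 * \<eta> * (u x * f * p) \<le> lam * c x * (u x * f * p)"
        using u0 f0 p0 by (intro mult_right_mono) auto
      have t3: "0 \<le> h x * f * p" using h0 f0 p0 by simp
      have "Rr x - A1 x = (\<mu> x * f - d) * p * g + lam * c x * (u x * f * p) + h x * f * p"
        using x by (simp add: Rr_def A1_def v_def f_def d_def p_def g_def algebra_simps)
      moreover have "Lw x = \<Lambda>\<^sub>1 * \<eta> * (u x * f * p)" using x by (simp add: Lw_def f_def p_def)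
      ultimately show ?thesis using t1 t2 t3 by linarith
    qed
  qed
  have pt2: "\<And>x. - Hl x \<le> (Kb / \<eta>) * E0 x"
  proof -
    fix x
    have he0: "He \<eta> \<epsilon> (u x) \<ge> 0" by (rule He_nonneg[OF ep et])
    have hele: "He \<eta> \<epsilon> (u x) \<le> exp (\<eta> * u x) / \<eta>" by (rule He_le[OF ep et])
    have kp: "Kb * \<psi> x \<ge> 0" using Kb psi(2) by simp
    have "He \<eta> \<epsilon> (u x) * (- lap \<psi> x) \<le> He \<eta> \<epsilon> (u x) * (Kb * \<psi> x)"
      by (rule mult_left_mono[OF lapb he0])
    also have "\<dots> \<le> exp (\<eta> * u x) / \<eta> * (Kb * \<psi> x)" by (rule mult_right_mono[OF hele kp])
    finally have "He \<eta> \<epsilon> (u x) * (- lap \<psi> x) \<le> (Kb / \<eta>) * (exp (\<eta> * u x) * \<psi> x)"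
      by (simp add: field_simps)
    then show "- Hl x \<le> (Kb / \<eta>) * E0 x"
      by (cases "x \<in> \<Omega>") (auto simp: Hl_def E0_def)
  qed
  have pt3: "AE x in lebesgue. \<Lambda>\<^sub>1 * \<eta> / 2 * E1 x \<le> Lw x"
    using uM'
  proof eventually_elim
    case (elim x)
    show ?case
    proof (cases "x \<in> \<Omega>")
      case True
      then have u0: "0 \<le> u x" "u x \<le> M'" using elim by auto
      have fl: "exp (\<eta> * u x) / 2 \<le> F (u x)" unfolding F_def \<epsilon>_def by (rule Fe_lower[OF et u0])
      have nn: "0 \<le> \<Lambda>\<^sub>1 * \<eta> * u x * \<psi> x" using lam et u0 psi(2) by simp
      have "(\<Lambda>\<^sub>1 * \<eta> * u x * \<psi> x) * (exp (\<eta> * u x) / 2) \<le> (\<Lambda>\<^sub>1 * \<eta> * u x * \<psi> x) * F (u x)"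
        by (rule mult_left_mono[OF fl nn])
      then show ?thesis using True by (simp add: E1_def Lw_def algebra_simps)
    qed (simp add: E1_def Lw_def)
  qed
  have "\<Lambda>\<^sub>1 * \<eta> / 2 * integral\<^sup>L lebesgue E1 = integral\<^sup>L lebesgue (\<lambda>x. \<Lambda>\<^sub>1 * \<eta> / 2 * E1 x)" by simp
  also have "\<dots> \<le> integral\<^sup>L lebesgue Lw"
    by (rule integral_mono_AE[OF _ Lwi pt3]) (use E1i in simp)
  also have "\<dots> \<le> integral\<^sup>L lebesgue (\<lambda>x. Rr x - A1 x)"
    by (rule integral_mono_AE[OF Lwi _ pt1]) (use Rri A1i in simp)
  also have "\<dots> = integral\<^sup>L lebesgue A2"
    using sumA Rri A1i by simp
  also have "\<dots> = integral\<^sup>L lebesgue (\<lambda>x. - Hl x)" using A2H Hli by simp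
  also have "\<dots> \<le> integral\<^sup>L lebesgue (\<lambda>x. (Kb / \<eta>) * E0 x)"
    by (rule integral_mono) (use Hli E0i pt2 in auto)
  also have "\<dots> = (Kb / \<eta>) * integral\<^sup>L lebesgue E0" by simp
  finally show "\<Lambda>\<^sub>1 * \<eta> / 2 * integral\<^sup>L lebesgue (\<lambda>x. indicator \<Omega> x * (u x * exp (\<eta> * u x) * \<psi> x))
     \<le> (Kb / \<eta>) * integral\<^sup>L lebesgue (\<lambda>x. indicator \<Omega> x * (exp (\<eta> * u x) * \<psi> x))"
    unfolding E0_def[abs_def] E1_def[abs_def] .
  show "integrable lebesgue (\<lambda>x. indicator \<Omega> x * (u x * exp (\<eta> * u x) * \<psi> x))" using E1i unfolding E1_def[abs_def] .
  show "integrable lebesgue (\<lambda>x. indicator \<Omega> x * (exp (\<eta> * u x) * \<psi> x))" using E0i unfolding E0_def[abs_def] .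
qed

lemma abs_le_powr: assumes "(r::real) \<ge> 1" shows "\<bar>t\<bar> \<le> 1 + \<bar>t\<bar> powr r"
proof (cases "\<bar>t\<bar> \<le> 1")
  case True then show ?thesis by (smt (verit) powr_ge_zero)
next
  case False
  then have "\<bar>t\<bar> powr 1 \<le> \<bar>t\<bar> powr r" by (intro powr_mono) (use assms in auto)
  then show ?thesis using False by simp
qed

theorem lemma4:
  fixes \<Omega> :: "'a::euclidean_space set"
    and \<mu> c h :: "'a \<Rightarrow> real"
    and r \<eta> \<rho> \<Lambda>\<^sub>1 :: real and x\<^sub>0 :: 'a
  assumes dom: "C2_bounded_domain \<Omega>"
    and mu: "Linf_on \<Omega> \<mu>" and cc: "Linf_on \<Omega> c"
    and r: "r > max 1 (real DIM('a) / 2)" and hh: "Lp_on r \<Omega> h"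
    and mu_nn: "AE x in lebesgue. x \<in> \<Omega> \<longrightarrow> \<mu> x \<ge> 0"
    and c_nn: "AE x in lebesgue. x \<in> \<Omega> \<longrightarrow> c x \<ge> 0"
    and h_nn: "AE x in lebesgue. x \<in> \<Omega> \<longrightarrow> h x \<ge> 0"
    and mu_nz: "\<not> (AE x in lebesgue. x \<in> \<Omega> \<longrightarrow> \<mu> x = 0)"
    and c_nz: "\<not> (AE x in lebesgue. x \<in> \<Omega> \<longrightarrow> c x = 0)"
    and h_nz: "\<not> (AE x in lebesgue. x \<in> \<Omega> \<longrightarrow> h x = 0)"
    and x0: "x\<^sub>0 \<in> \<Omega>" and rho: "\<rho> > 0" and eta: "\<eta> > 0"
    and ball: "ball x\<^sub>0 \<rho> \<subseteq> \<Omega>"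
    and mu_eta: "AE x in lebesgue. x \<in> ball x\<^sub>0 \<rho> \<longrightarrow> \<mu> x \<ge> \<eta>"
    and c_eta: "AE x in lebesgue. x \<in> ball x\<^sub>0 \<rho> \<longrightarrow> c x \<ge> \<eta>"
    and Lam: "0 < \<Lambda>\<^sub>1" "\<Lambda>\<^sub>1 \<le> first_eigenvalue \<Omega> c"
  shows "\<exists>C>0. \<forall>lam\<in>{\<Lambda>\<^sub>1..first_eigenvalue \<Omega> c}. \<forall>u.
           is_solution \<Omega> \<mu> c h lam u \<and> (AE x in lebesgue. x \<in> \<Omega> \<longrightarrow> u x \<ge> 0) \<longrightarrow>
           set_lebesgue_integral lebesgue (ball x\<^sub>0 (\<rho>/2)) (\<lambda>x. exp (\<eta> * u x)) \<le> C"
proof -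
  have Oopen: "open \<Omega>" and Obdd: "bounded \<Omega>" using dom unfolding C2_bounded_domain_def by auto
  have Olm: "\<Omega> \<in> lmeasurable" by (rule lmeasurable_open[OF Obdd Oopen])
  have Om1: "\<Omega> \<in> sets lebesgue" by (rule fmeasurableD[OF Olm])
  have Om2: "emeasure lebesgue \<Omega> < \<infinity>" using fmeasurableD2[OF Olm] by (simp only: infinity_ennreal_def less_top)
  note Om = Om1 Om2
  have r1: "r \<ge> 1" using r by simp
  have hm: "set_borel_measurable lebesgue \<Omega> h" and hr: "set_integrable lebesgue \<Omega> (\<lambda>x. \<bar>h x\<bar> powr r)"
    using hh unfolding Lp_on_def by auto
  have Oi: "integrable lebesgue (indicator \<Omega> :: 'a \<Rightarrow> real)" using Om by (intro integrable_real_indicator) auto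
  have hint: "integrable lebesgue (\<lambda>x. indicator \<Omega> x * \<bar>h x\<bar>)"
  proof (rule int_restrict[OF Om(1), where g="\<lambda>x. \<bar>indicator \<Omega> x * h x\<bar>" and w="\<lambda>x. indicator \<Omega> x + indicator \<Omega> x * \<bar>h x\<bar> powr r"])
    show "(\<lambda>x. \<bar>indicator \<Omega> x * h x\<bar>) \<in> borel_measurable lebesgue"
      using hm unfolding set_borel_measurable_def by simp
    show "integrable lebesgue (\<lambda>x. indicator \<Omega> x + indicator \<Omega> x * \<bar>h x\<bar> powr r)"
      using Oi hr by (intro Bochner_Integration.integrable_add) (simp_all add: set_intble_real)
    show "\<bar>h x\<bar> = \<bar>indicator \<Omega> x * h x\<bar>" if "x \<in> \<Omega>" for x using that by simp
    show "\<bar>\<bar>h x\<bar>\<bar> \<le> indicator \<Omega> x + indicator \<Omega> x * \<bar>h x\<bar> powr r" if "x \<in> \<Omega>" for x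
      using that abs_le_powr[OF r1, of "h x"] by simp
    show "0 \<le> indicator \<Omega> x + indicator \<Omega> x * \<bar>h x\<bar> powr r" for x by simp
  qed
  define R where "R = 3 * \<rho> / 4"
  have R: "R > 0" "R < \<rho>" using rho by (simp_all add: R_def)
  define \<psi> where "\<psi> = bump x\<^sub>0 R"
  have psi_t: "test_fun \<Omega> \<psi>"
    unfolding test_fun_def
  proof (intro conjI exI[of _ "cball x\<^sub>0 R"])
    show "smooth_fun \<psi>" unfolding \<psi>_def by (rule smooth_bump)
    show "compact (cball x\<^sub>0 R)" by simp
    have "cball x\<^sub>0 R \<subseteq> ball x\<^sub>0 \<rho>" using R by (simp add: cball_subset_ball_iff)
    then show "cball x\<^sub>0 R \<subseteq> \<Omega>" using ball by (rule order_trans)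
    show "\<forall>x. x \<notin> cball x\<^sub>0 R \<longrightarrow> \<psi> x = 0"
    proof (intro allI impI)
      fix x assume "x \<notin> cball x\<^sub>0 R"
      then have "x \<notin> ball x\<^sub>0 R" by auto
      then show "\<psi> x = 0" unfolding \<psi>_def by (rule bump_zero[OF R(1)])
    qed
  qed
  have psi0: "\<psi> x \<ge> 0" for x unfolding \<psi>_def by (rule bump_nonneg)
  have psi1: "\<psi> x \<le> 1" for x unfolding \<psi>_def bump_def bet_def by auto
  have supp: "\<psi> x \<noteq> 0 \<Longrightarrow> x \<in> ball x\<^sub>0 \<rho>" for x
  proof -
    assume "\<psi> x \<noteq> 0"
    then have "x \<in> ball x\<^sub>0 R" unfolding \<psi>_def using bump_zero[OF R(1), of x x\<^sub>0] by blast
    then show ?thesis using R by auto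
  qed
  define Kb where "Kb = bumpK R (real DIM('a))"
  have Kb: "Kb > 0"
  proof -
    have "8 * R\<^sup>2 + 4 > 0" by (simp add: add_nonneg_pos)
    then have a: "(8 * R\<^sup>2 + 4)\<^sup>2 / (4 * R\<^sup>2) > 0" using R by (intro divide_pos_pos) auto
    have "(8 * R\<^sup>2 + 4)\<^sup>2 / (4 * R\<^sup>2) + 2 * real DIM('a) > 0" using a by (simp add: add_pos_nonneg)
    then show ?thesis unfolding Kb_def bumpK_def using R by (intro divide_pos_pos) auto
  qed
  have lapb: "- lap \<psi> x \<le> Kb * \<psi> x" for x unfolding \<psi>_def Kb_def by (rule lap_bump_bound[OF R(1)])
  define \<delta> where "\<delta> = exp (-16/(5*\<rho>\<^sup>2))"
  have \<delta>: "\<delta> > 0" unfolding \<delta>_def by simp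
  have psid: "x \<in> ball x\<^sub>0 (\<rho>/2) \<Longrightarrow> \<psi> x \<ge> \<delta>" for x unfolding \<psi>_def \<delta>_def R_def by (rule bump_pos[OF rho])
  define T where "T = 4 * Kb / (\<Lambda>\<^sub>1 * \<eta>\<^sup>2)"
  have T: "T > 0" unfolding T_def using Kb Lam eta by simp
  define p where "p = integral\<^sup>L lebesgue (\<lambda>x. indicator \<Omega> x * \<psi> x)"
  have p0: "p \<ge> 0" unfolding p_def using psi0 by (intro integral_nonneg_AE AE_I2) simp
  have pint: "integrable lebesgue (\<lambda>x. indicator \<Omega> x * \<psi> x)"
  proof -
    interpret psi: tf \<Omega> \<psi> by (rule tf.intro) (rule psi_t)
    have "integrable lebesgue \<psi>" by (rule int_cs[OF psi.cont psi.K(1) psi.K(3)])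
    from integrable_mult_indicator[OF Om(1) this] show ?thesis by simp
  qed
  define C where "C = 2 * exp (\<eta> * T) * p / \<delta> + 1"
  have C: "C > 0" unfolding C_def using p0 \<delta> by (simp add: add_nonneg_pos)
  show ?thesis
  proof (intro exI[of _ C] conjI ballI allI impI)
    show "C > 0" by fact
    fix lam u assume lam: "lam \<in> {\<Lambda>\<^sub>1..first_eigenvalue \<Omega> c}"
      and sol: "is_solution \<Omega> \<mu> c h lam u \<and> (AE x in lebesgue. x \<in> \<Omega> \<longrightarrow> u x \<ge> 0)"
    from sol obtain G where H: "H10 \<Omega> u G" and Linfu: "Linf_on \<Omega> u"
      and weak: "\<forall>v Gv. H10 \<Omega> v Gv \<and> Linf_on \<Omega> v \<longrightarrow>
           set_lebesgue_integral lebesgue \<Omega> (\<lambda>x. G x \<bullet> Gv x) =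
           set_lebesgue_integral lebesgue \<Omega>
             (\<lambda>x. (\<mu> x * (norm (G x))\<^sup>2 + lam * c x * u x + h x) * v x)"
      unfolding is_solution_def by blast
    have unn: "AE x in lebesgue. x \<in> \<Omega> \<longrightarrow> u x \<ge> 0" using sol by blast
    obtain Mu where Mu: "AE x in lebesgue. x \<in> \<Omega> \<longrightarrow> \<bar>u x\<bar> \<le> Mu" and um: "set_borel_measurable lebesgue \<Omega> u"
      using Linfu unfolding Linf_on_def by blast
    have uM: "AE x in lebesgue. x \<in> \<Omega> \<longrightarrow> 0 \<le> u x \<and> u x \<le> Mu"
      using Mu unn by eventually_elim auto
    have lamge: "lam \<ge> \<Lambda>\<^sub>1" using lam by simp
    note cr = core[OF Om H weak uM mu cc hm hint h_nn psi_t psi0 psi1 supp mu_eta c_eta eta lamge Lam(1) lapb less_imp_le[OF Kb]]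
    define a where "a = integral\<^sup>L lebesgue (\<lambda>x. indicator \<Omega> x * (exp (\<eta> * u x) * \<psi> x))"
    define b where "b = integral\<^sup>L lebesgue (\<lambda>x. indicator \<Omega> x * (u x * exp (\<eta> * u x) * \<psi> x))"
    have ab: "\<Lambda>\<^sub>1 * \<eta> / 2 * b \<le> (Kb / \<eta>) * a" using cr(1) unfolding a_def b_def .
    have a2: "a \<le> exp (\<eta> * T) * p + b / T"
    proof -
      have "a \<le> integral\<^sup>L lebesgue (\<lambda>x. exp (\<eta> * T) * (indicator \<Omega> x * \<psi> x) + (1 / T) * (indicator \<Omega> x * (u x * exp (\<eta> * u x) * \<psi> x)))"
        unfolding a_def
      proof (rule integral_mono_AE[OF cr(3)])
        show "integrable lebesgue (\<lambda>x. exp (\<eta> * T) * (indicator \<Omega> x * \<psi> x) + (1 / T) * (indicator \<Omega> x * (u x * exp (\<eta> * u x) * \<psi> x)))"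
          using pint cr(2) by (intro Bochner_Integration.integrable_add integrable_mult_right)
        show "AE x in lebesgue. indicator \<Omega> x * (exp (\<eta> * u x) * \<psi> x) \<le>
            exp (\<eta> * T) * (indicator \<Omega> x * \<psi> x) + (1 / T) * (indicator \<Omega> x * (u x * exp (\<eta> * u x) * \<psi> x))"
          using unn
        proof eventually_elim
          case (elim x)
          show ?case
          proof (cases "x \<in> \<Omega>")
            case True
            then have u0: "u x \<ge> 0" using elim by auto
            have key: "exp (\<eta> * u x) \<le> exp (\<eta> * T) + (1 / T) * (u x * exp (\<eta> * u x))"
            proof (cases "u x \<le> T")
              case True
              then have "exp (\<eta> * u x) \<le> exp (\<eta> * T)" using eta by simp
              moreover have "0 \<le> (1 / T) * (u x * exp (\<eta> * u x))" using T u0 by simp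
              ultimately show ?thesis by linarith
            next
              case False
              then have "1 \<le> u x / T" using T by simp
              then have "1 * exp (\<eta> * u x) \<le> (u x / T) * exp (\<eta> * u x)" by (intro mult_right_mono) auto
              then show ?thesis by (simp add: add_nonneg_nonneg) (smt (verit) exp_gt_zero)
            qed
            have "exp (\<eta> * u x) * \<psi> x \<le> (exp (\<eta> * T) + (1 / T) * (u x * exp (\<eta> * u x))) * \<psi> x"
              by (rule mult_right_mono[OF key psi0])
            then show ?thesis using True by (simp add: algebra_simps)
          qed simp
        qed
      qed
      also have "\<dots> = exp (\<eta> * T) * p + b / T"
        unfolding p_def b_def using pint cr(2) by simp
      finally show ?thesis .
    qed
    have bT: "b / T \<le> a / 2"
    proof -
      have e: "b / T = (\<Lambda>\<^sub>1 * \<eta> / 2 * b) * (\<eta> / (2 * Kb))"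
        unfolding T_def using Kb Lam eta by (simp add: field_simps power2_eq_square)
      have "(\<Lambda>\<^sub>1 * \<eta> / 2 * b) * (\<eta> / (2 * Kb)) \<le> ((Kb / \<eta>) * a) * (\<eta> / (2 * Kb))"
        by (rule mult_right_mono[OF ab]) (use Kb eta in simp)
      also have "\<dots> = a / 2" using Kb eta by (simp add: field_simps)
      finally show ?thesis unfolding e .
    qed
    have abound: "a \<le> 2 * exp (\<eta> * T) * p" using a2 bT by linarith
    have Bm: "ball x\<^sub>0 (\<rho>/2) \<in> sets lebesgue" "emeasure lebesgue (ball x\<^sub>0 (\<rho>/2)) < \<infinity>"
      using fmeasurableD[OF lmeasurable_ball] fmeasurableD2[OF lmeasurable_ball, of x\<^sub>0 "\<rho>/2"]
      by (simp_all only: infinity_ennreal_def less_top)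
    have "ball x\<^sub>0 (\<rho>/2) \<subseteq> ball x\<^sub>0 \<rho>" by (rule subset_ball) (use rho in simp)
    then have Bsub: "ball x\<^sub>0 (\<rho>/2) \<subseteq> \<Omega>" using ball by (rule order_trans)
    define ut where "ut x = indicator \<Omega> x * u x" for x
    have utm: "ut \<in> borel_measurable lebesgue" using um unfolding set_borel_measurable_def ut_def by simp
    have Bint: "integrable lebesgue (\<lambda>x. indicator (ball x\<^sub>0 (\<rho>/2)) x * exp (\<eta> * u x))"
    proof (rule int_bdd_AE[OF Bm, where g="\<lambda>x. exp (\<eta> * ut x)" and B="exp (\<eta> * Mu)"])
      show "(\<lambda>x. exp (\<eta> * ut x)) \<in> borel_measurable lebesgue" using utm by measurable
      show "exp (\<eta> * u x) = exp (\<eta> * ut x)" if "x \<in> ball x\<^sub>0 (\<rho>/2)" for x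
        using that Bsub by (auto simp: ut_def)
      show "AE x in lebesgue. x \<in> ball x\<^sub>0 (\<rho>/2) \<longrightarrow> \<bar>exp (\<eta> * u x)\<bar> \<le> exp (\<eta> * Mu)"
        using Mu
      proof eventually_elim
        case (elim x)
        show ?case using elim Bsub eta by (auto intro: mult_left_mono)
      qed
    qed
    have "set_lebesgue_integral lebesgue (ball x\<^sub>0 (\<rho>/2)) (\<lambda>x. exp (\<eta> * u x)) =
        integral\<^sup>L lebesgue (\<lambda>x. indicator (ball x\<^sub>0 (\<rho>/2)) x * exp (\<eta> * u x))" by (rule set_int_real)
    also have "\<dots> \<le> integral\<^sup>L lebesgue (\<lambda>x. (1 / \<delta>) * (indicator \<Omega> x * (exp (\<eta> * u x) * \<psi> x)))"
    proof (rule integral_mono[OF Bint])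
      show "integrable lebesgue (\<lambda>x. (1 / \<delta>) * (indicator \<Omega> x * (exp (\<eta> * u x) * \<psi> x)))"
        using cr(3) by (rule integrable_mult_right)
      fix x
      show "indicator (ball x\<^sub>0 (\<rho>/2)) x * exp (\<eta> * u x) \<le> (1 / \<delta>) * (indicator \<Omega> x * (exp (\<eta> * u x) * \<psi> x))"
      proof (cases "x \<in> ball x\<^sub>0 (\<rho>/2)")
        case True
        then have xO: "x \<in> \<Omega>" using Bsub by auto
        have "exp (\<eta> * u x) * \<delta> \<le> exp (\<eta> * u x) * \<psi> x" using psid[OF True] by simp
        then have "exp (\<eta> * u x) \<le> (1 / \<delta>) * (exp (\<eta> * u x) * \<psi> x)" using \<delta> by (simp add: field_simps)
        then show ?thesis using True xO by simp
      next
        case False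
        have "0 \<le> (1 / \<delta>) * (indicator \<Omega> x * (exp (\<eta> * u x) * \<psi> x))" using \<delta> psi0[of x] by simp
        then show ?thesis using False by simp
      qed
    qed
    also have "\<dots> = a / \<delta>" unfolding a_def by simp
    also have "\<dots> \<le> 2 * exp (\<eta> * T) * p / \<delta>" using abound \<delta> by (simp add: divide_right_mono)
    also have "\<dots> < C" unfolding C_def by simp
    finally show "set_lebesgue_integral lebesgue (ball x\<^sub>0 (\<rho>/2)) (\<lambda>x. exp (\<eta> * u x)) \<le> C" by simp
  qed
qed

end
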